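(* Let $\mathcal{M}=(S,A,\Delta,T,\rho)$ be a w\~pMDP whose target states are $T=\{t_0,\dots,t_n\}$ with $0=\rho(t_0)<\rho(t_1)<\dots<\rho(t_n)$, and let $\mathcal{G}(\mathcal{M})=(V,E)$. Let $\mathcal{N}$ be the \~pMDP obtained from $\mathcal{M}$ by adding two fresh states $\mathit{fin},\mathit{fail}$ (the only target states of $\mathcal{N}$), a fresh action $a\notin A$, keeping all transitions of $\Delta$, and adding the transitions $(t_i,a,\mathit{fin})$ and $(t_i,a,t_{i-1})$ for every $i\in\{1,\dots,n\}$ and $(t_0,a,\mathit{fail})$ (so each $t_i$ is a non-target state of $\mathcal{N}$). Then for every $v\in V$ and every $W\subseteq V$: $v\trianglelefteq W$ holds in $\mathcal{M}$ if and only if $v\trianglelefteq W$ holds in $\mathcal{N}$.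
   Context: A weighted parametric MDP (wpMDP) is $(S,A,X,\delta,T,\rho)$: finite states $S$, actions $A$, parameters $X$, targets $T\subseteq S$ (no outgoing transitions), $\delta:(S\setminus T)\times A\times S\to\mathbb{Q}[X]$, weights $\rho:T\to\mathbb{Q}$. A weighted trivially parametric MDP (w\~pMDP) is a wpMDP where every $\delta(s,a,s')$ is either syntactically $0$ or a parameter used on no other transition; it is written $(S,A,\Delta,T,\rho)$ with $\Delta\subseteq (S\setminus T)\times A\times S$ the set of transitions with nonzero polynomial. A \~pMDP is a w\~pMDP with $T=\{\mathit{fin},\mathit{fail}\}$, $\rho(\mathit{fin})=1$, $\rho(\mathit{fail})=0$. Its graph $\mathcal{G}=(V,E)$ has $V=S\cup((S\setminus T)\times A)$, an edge $((s,a),s')$ iff $(s,a,s')\in\Delta$, and an edge $(s,(s,a))$ iff $(s,a,s')\in\Delta$ for some $s'$ other than the zero-weight target $\mathit{fail}$; $vE$ is the successor set. Graph-preserving valuations are exactly the assignments, to every $(s,a)$ with $s\notin T$, of a probability distribution with full support on $\{s':(s,a,s')\in\Delta\}$ (if this set is empty, $(s,a)$ moves to the zero-weight target with probability $1$). A strategy $\sigma:S\setminus T\to A$ and a valuation $\mathsf{val}$ induce a Markov chain; $\mathrm{Rew}^\sigma_{\mathsf{val}}(s)=\sum_{t\in T}\rho(t)\mathbb{P}^s[\Diamond t]$ for states, $\mathrm{Rew}^\sigma_{\mathsf{val}}((s,a))=\sum_{s'}\mathsf{val}_{(s,a)}(s')\mathrm{Rew}^\sigma_{\mathsf{val}}(s')$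 for state-action pairs, and $\mathrm{Rew}^*_{\mathsf{val}}(v)=\max_\sigma\mathrm{Rew}^\sigma_{\mathsf{val}}(v)$. Never-worse relation: $v\trianglelefteq W$ iff for every graph-preserving valuation $\mathsf{val}$ there is $w\in W$ with $\mathrm{Rew}^*_{\mathsf{val}}(v)\le\mathrm{Rew}^*_{\mathsf{val}}(w)$. *)

theory Defs
  imports Complex_Main "HOL-Library.FuncSet"
begin

text \<open>A weighted trivially parametric MDP is given by the components
  S (states), A (actions), Delta (transitions with nonzero polynomial),
  T (targets), rho (weights).\<close>

definition wtpMDP ::
  "'s set \<Rightarrow> 'a set \<Rightarrow> ('s \<times> 'a \<times> 's) set \<Rightarrow> 's set \<Rightarrow> ('s \<Rightarrow> real) \<Rightarrow> bool" where
  "wtpMDP S A Delta T rho \<longleftrightarrow>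
     finite S \<and> finite A \<and> A \<noteq> {} \<and> T \<subseteq> S \<and>
     Delta \<subseteq> (S - T) \<times> A \<times> S \<and> (\<forall>t\<in>T. rho t \<in> \<rat>)"

definition succs :: "('s \<times> 'a \<times> 's) set \<Rightarrow> 's \<Rightarrow> 'a \<Rightarrow> 's set" where
  "succs Delta s a = {s'. (s, a, s') \<in> Delta}"

text \<open>If there is no successor the pair
  moves to a zero-weight target; this is modelled by assigning it the zero
  (sub-stochastic) vector, the lost mass contributing reward 0.\<close>

definition gp_val ::
  "'s set \<Rightarrow> 'a set \<Rightarrow> ('s \<times> 'a \<times> 's) set \<Rightarrow> 's set \<Rightarrow> ('s \<Rightarrow> 'a \<Rightarrow> 's \<Rightarrow> real) \<Rightarrow> bool" where
  "gp_val S A Delta T val \<longleftrightarrow>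
     (\<forall>s\<in>S - T. \<forall>a\<in>A.
        (succs Delta s a \<noteq> {} \<longrightarrow>
           (\<forall>s'. (s' \<in> succs Delta s a \<longrightarrow> val s a s' > 0) \<and>
                 (s' \<notin> succs Delta s a \<longrightarrow> val s a s' = 0)) \<and>
           sum (val s a) (succs Delta s a) = 1) \<and>
        (succs Delta s a = {} \<longrightarrow> (\<forall>s'. val s a s' = 0)))"

fun reach_within ::
  "'s set \<Rightarrow> 's set \<Rightarrow> ('s \<Rightarrow> 'a \<Rightarrow> 's \<Rightarrow> real) \<Rightarrow> ('s \<Rightarrow> 'a) \<Rightarrow> 's \<Rightarrow> nat \<Rightarrow> 's \<Rightarrow> real" where
  "reach_within S T val sigma t 0 s = (if s = t then 1 else 0)"
| "reach_within S T val sigma t (Suc k) s =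
     (if s \<in> T then (if s = t then 1 else 0)
      else (\<Sum>s'\<in>S. val s (sigma s) s' * reach_within S T val sigma t k s'))"

definition reach_prob ::
  "'s set \<Rightarrow> 's set \<Rightarrow> ('s \<Rightarrow> 'a \<Rightarrow> 's \<Rightarrow> real) \<Rightarrow> ('s \<Rightarrow> 'a) \<Rightarrow> 's \<Rightarrow> 's \<Rightarrow> real" where
  "reach_prob S T val sigma s t = (SUP k. reach_within S T val sigma t k s)"

definition Rew_state ::
  "'s set \<Rightarrow> 's set \<Rightarrow> ('s \<Rightarrow> real) \<Rightarrow> ('s \<Rightarrow> 'a \<Rightarrow> 's \<Rightarrow> real) \<Rightarrow> ('s \<Rightarrow> 'a) \<Rightarrow> 's \<Rightarrow> real" where
  "Rew_state S T rho val sigma s = (\<Sum>t\<in>T. rho t * reach_prob S T val sigma s t)"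

definition vertices :: "'s set \<Rightarrow> 'a set \<Rightarrow> 's set \<Rightarrow> ('s + ('s \<times> 'a)) set" where
  "vertices S A T = Inl ` S \<union> Inr ` ((S - T) \<times> A)"

definition Rew_vertex ::
  "'s set \<Rightarrow> 's set \<Rightarrow> ('s \<Rightarrow> real) \<Rightarrow> ('s \<Rightarrow> 'a \<Rightarrow> 's \<Rightarrow> real) \<Rightarrow> ('s \<Rightarrow> 'a)
     \<Rightarrow> ('s + ('s \<times> 'a)) \<Rightarrow> real" where
  "Rew_vertex S T rho val sigma v =
     (case v of Inl s \<Rightarrow> Rew_state S T rho val sigma s
              | Inr (s, a) \<Rightarrow> (\<Sum>s'\<in>S. val s a s' * Rew_state S T rho val sigma s'))"

definition Rew_opt ::
  "'s set \<Rightarrow> 'a set \<Rightarrow> 's set \<Rightarrow> ('s \<Rightarrow> real) \<Rightarrow> ('s \<Rightarrow> 'a \<Rightarrow> 's \<Rightarrow> real)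
     \<Rightarrow> ('s + ('s \<times> 'a)) \<Rightarrow> real" where
  "Rew_opt S A T rho val v =
     Max ((\<lambda>sigma. Rew_vertex S T rho val sigma v) ` ((S - T) \<rightarrow>\<^sub>E A))"

definition never_worse ::
  "'s set \<Rightarrow> 'a set \<Rightarrow> ('s \<times> 'a \<times> 's) set \<Rightarrow> 's set \<Rightarrow> ('s \<Rightarrow> real)
     \<Rightarrow> ('s + ('s \<times> 'a)) \<Rightarrow> ('s + ('s \<times> 'a)) set \<Rightarrow> bool" where
  "never_worse S A Delta T rho v W \<longleftrightarrow>
     (\<forall>val. gp_val S A Delta T val \<longrightarrow>
        (\<exists>w\<in>W. Rew_opt S A T rho val v \<le> Rew_opt S A T rho val w))"

end

theory Submission
  imports Defs
begin


definition Rk where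
  "Rk S T rho val sigma k s = (\<Sum>t\<in>T. rho t * reach_within S T val sigma t k s)"

locale pm =
  fixes S :: "'s set" and A :: "'a set" and T :: "'s set"
    and val :: "'s \<Rightarrow> 'a \<Rightarrow> 's \<Rightarrow> real" and rho :: "'s \<Rightarrow> real"
  assumes finS: "finite S" and TS: "T \<subseteq> S" and finA: "finite A" and Ane: "A \<noteq> {}"
    and nonneg: "\<And>s a s'. s \<in> S - T \<Longrightarrow> a \<in> A \<Longrightarrow> s' \<in> S \<Longrightarrow> 0 \<le> val s a s'"
    and rowsum: "\<And>s a. s \<in> S - T \<Longrightarrow> a \<in> A \<Longrightarrow> sum (val s a) S \<le> 1"
    and rho_nn: "\<And>t. t \<in> T \<Longrightarrow> 0 \<le> rho t"
begin

definition strat :: "('s \<Rightarrow> 'a) \<Rightarrow> bool" where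
  "strat sigma \<longleftrightarrow> (\<forall>s\<in>S - T. sigma s \<in> A)"

definition closedC :: "('s \<Rightarrow> 'a) \<Rightarrow> 's set \<Rightarrow> bool" where
  "closedC sigma C \<longleftrightarrow> C \<subseteq> S - T \<and> (\<forall>s\<in>C. \<forall>s'\<in>S. 0 < val s (sigma s) s' \<longrightarrow> s' \<in> C)"

abbreviation H where "H sigma s \<equiv> Rew_state S T rho val sigma s"

lemma finT: "finite T" using finS TS finite_subset by blast

lemma rw_bounds:
  assumes "strat sigma" "t \<in> T"
  shows "s \<in> S \<Longrightarrow> 0 \<le> reach_within S T val sigma t k s \<and> reach_within S T val sigma t k s \<le> 1"
proof (induction k arbitrary: s)
  case 0 then show ?case by simp
next
  case (Suc k)
  show ?case
  proof (cases "s \<in> T")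
    case True then show ?thesis by simp
  next
    case False
    have sA: "sigma s \<in> A" using assms(1) Suc.prems False unfolding strat_def by blast
    have nn: "\<And>s'. s' \<in> S \<Longrightarrow> 0 \<le> val s (sigma s) s'" using nonneg Suc.prems False sA by blast
    have "(\<Sum>s'\<in>S. val s (sigma s) s' * reach_within S T val sigma t k s') \<le> (\<Sum>s'\<in>S. val s (sigma s) s')"
      by (rule sum_mono) (use nn Suc.IH in \<open>auto intro: mult_left_le\<close>)
    also have "\<dots> \<le> 1" using rowsum Suc.prems False sA by blast
    finally have 1: "(\<Sum>s'\<in>S. val s (sigma s) s' * reach_within S T val sigma t k s') \<le> 1" .
    have 2: "0 \<le> (\<Sum>s'\<in>S. val s (sigma s) s' * reach_within S T val sigma t k s')"
      by (rule sum_nonneg) (use nn Suc.IH in auto)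
    show ?thesis using 1 2 False by simp
  qed
qed

lemma rw_mono:
  assumes "strat sigma" "t \<in> T"
  shows "s \<in> S \<Longrightarrow> reach_within S T val sigma t k s \<le> reach_within S T val sigma t (Suc k) s"
proof (induction k arbitrary: s)
  case 0
  show ?case
  proof (cases "s \<in> T")
    case True then show ?thesis by simp
  next
    case False
    have sA: "sigma s \<in> A" using assms(1) 0 False unfolding strat_def by blast
    have nn: "\<And>s'. s' \<in> S \<Longrightarrow> 0 \<le> val s (sigma s) s'" using nonneg 0 False sA by blast
    have "0 \<le> (\<Sum>s'\<in>S. val s (sigma s) s' * reach_within S T val sigma t 0 s')"
      by (rule sum_nonneg) (use nn in auto)
    moreover have "s \<noteq> t" using False assms(2) by auto
    ultimately show ?thesis using False by simp
  qed
next
  case (Suc k)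
  show ?case
  proof (cases "s \<in> T")
    case True then show ?thesis by simp
  next
    case False
    have sA: "sigma s \<in> A" using assms(1) Suc.prems False unfolding strat_def by blast
    have nn: "\<And>s'. s' \<in> S \<Longrightarrow> 0 \<le> val s (sigma s) s'" using nonneg Suc.prems False sA by blast
    have "(\<Sum>s'\<in>S. val s (sigma s) s' * reach_within S T val sigma t k s') \<le>
          (\<Sum>s'\<in>S. val s (sigma s) s' * reach_within S T val sigma t (Suc k) s')"
    proof (rule sum_mono)
      fix s' assume "s' \<in> S"
      then show "val s (sigma s) s' * reach_within S T val sigma t k s' \<le>
          val s (sigma s) s' * reach_within S T val sigma t (Suc k) s'"
        by (intro mult_left_mono Suc.IH nn)
    qed
    then show ?thesis using False by (simp only: reach_within.simps if_False)
  qed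
qed

lemma rw_tendsto:
  assumes "strat sigma" "t \<in> T" "s \<in> S"
  shows "(\<lambda>k. reach_within S T val sigma t k s) \<longlonglongrightarrow> reach_prob S T val sigma s t"
  unfolding reach_prob_def
proof (rule LIMSEQ_incseq_SUP)
  show "bdd_above (range (\<lambda>k. reach_within S T val sigma t k s))"
    using rw_bounds[OF assms] by (auto intro!: bdd_aboveI[where M=1])
  show "incseq (\<lambda>k. reach_within S T val sigma t k s)"
    using rw_mono[OF assms] by (simp add: incseq_SucI)
qed

lemma Rk_tendsto:
  assumes "strat sigma" "s \<in> S"
  shows "(\<lambda>k. Rk S T rho val sigma k s) \<longlonglongrightarrow> H sigma s"
  unfolding Rk_def Rew_state_def
  by (rule tendsto_sum, rule tendsto_mult_left, rule rw_tendsto[OF assms(1) _ assms(2)])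

lemma Rk_0: "Rk S T rho val sigma 0 s = (if s \<in> T then rho s else 0)"
proof -
  have "Rk S T rho val sigma 0 s = (\<Sum>t\<in>T. if s = t then rho t else 0)"
    unfolding Rk_def by (rule sum.cong) auto
  then show ?thesis using finT by simp
qed

lemma Rk_T: "s \<in> T \<Longrightarrow> Rk S T rho val sigma k s = rho s"
proof (cases k)
  case 0 assume "s \<in> T" then show ?thesis using 0 Rk_0 by simp
next
  case (Suc k') assume sT: "s \<in> T"
  have "Rk S T rho val sigma k s = (\<Sum>t\<in>T. if s = t then rho t else 0)"
    unfolding Rk_def Suc using sT by (intro sum.cong) auto
  then show ?thesis using finT sT by simp
qed

lemma Rk_Suc: "s \<notin> T \<Longrightarrow> Rk S T rho val sigma (Suc k) s =
   (\<Sum>s'\<in>S. val s (sigma s) s' * Rk S T rho val sigma k s')"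
proof -
  assume "s \<notin> T"
  then have "Rk S T rho val sigma (Suc k) s =
     (\<Sum>t\<in>T. \<Sum>s'\<in>S. rho t * (val s (sigma s) s' * reach_within S T val sigma t k s'))"
    unfolding Rk_def by (simp add: sum_distrib_left)
  also have "\<dots> = (\<Sum>s'\<in>S. \<Sum>t\<in>T. val s (sigma s) s' * (rho t * reach_within S T val sigma t k s'))"
    by (subst sum.swap) (simp add: algebra_simps)
  also have "\<dots> = (\<Sum>s'\<in>S. val s (sigma s) s' * Rk S T rho val sigma k s')"
    unfolding Rk_def by (simp add: sum_distrib_left)
  finally show ?thesis .
qed

lemma Rk_nonneg:
  assumes "strat sigma" shows "s \<in> S \<Longrightarrow> 0 \<le> Rk S T rho val sigma k s"
  unfolding Rk_def using rw_bounds[OF assms] rho_nn by (auto intro!: sum_nonneg)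

lemma H_T: assumes "strat sigma" "s \<in> T" shows "H sigma s = rho s"
proof -
  have sS: "s \<in> S" using assms TS by blast
  have 1: "(\<lambda>k. Rk S T rho val sigma k s) \<longlonglongrightarrow> H sigma s" using Rk_tendsto[OF assms(1) sS] .
  have "(\<lambda>k. Rk S T rho val sigma k s) = (\<lambda>k. rho s)" using Rk_T assms by auto
  then have 2: "(\<lambda>k. Rk S T rho val sigma k s) \<longlonglongrightarrow> rho s" by simp
  show ?thesis using 1 2 by (rule LIMSEQ_unique)
qed

lemma H_nonneg: assumes "strat sigma" "s \<in> S" shows "0 \<le> H sigma s"
proof -
  have *: "\<forall>k. 0 \<le> Rk S T rho val sigma k s" using Rk_nonneg[OF assms(1) assms(2)] by blast
  show ?thesis by (rule LIMSEQ_le_const[OF Rk_tendsto[OF assms]]) (use * in blast)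
qed

lemma H_harm: assumes "strat sigma" "s \<in> S - T"
  shows "H sigma s = (\<Sum>s'\<in>S. val s (sigma s) s' * H sigma s')"
proof -
  have "(\<lambda>k. Rk S T rho val sigma (Suc k) s) \<longlonglongrightarrow> H sigma s"
    using Rk_tendsto[OF assms(1)] assms(2) LIMSEQ_Suc by blast
  moreover have "(\<lambda>k. Rk S T rho val sigma (Suc k) s) \<longlonglongrightarrow> (\<Sum>s'\<in>S. val s (sigma s) s' * H sigma s')"
    using assms(2) by (simp add: Rk_Suc) (intro tendsto_sum tendsto_mult_left Rk_tendsto[OF assms(1)])
  ultimately show ?thesis using LIMSEQ_unique by blast
qed

lemma H_upper:
  assumes "strat sigma" and U0: "\<And>s. s \<in> S \<Longrightarrow> 0 \<le> U s" and UT: "\<And>s. s \<in> T \<Longrightarrow> rho s \<le> U s"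
    and Usup: "\<And>s. s \<in> S - T \<Longrightarrow> (\<Sum>s'\<in>S. val s (sigma s) s' * U s') \<le> U s"
    and "s \<in> S"
  shows "H sigma s \<le> U s"
proof -
  have "\<And>s. s \<in> S \<Longrightarrow> Rk S T rho val sigma k s \<le> U s" for k
  proof (induction k)
    case 0 then show ?case using U0 UT by (simp add: Rk_0)
  next
    case (Suc k)
    show ?case
    proof (cases "s \<in> T")
      case True then show ?thesis using Rk_T UT by simp
    next
      case False
      have sA: "sigma s \<in> A" using assms(1) Suc.prems False unfolding strat_def by blast
      have "(\<Sum>s'\<in>S. val s (sigma s) s' * Rk S T rho val sigma k s') \<le> (\<Sum>s'\<in>S. val s (sigma s) s' * U s')"
        by (rule sum_mono) (use nonneg Suc.prems False sA Suc.IH in \<open>auto intro: mult_left_mono\<close>)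
      also have "\<dots> \<le> U s" using Usup Suc.prems False by blast
      finally show ?thesis using False by (simp add: Rk_Suc)
    qed
  qed
  then have *: "\<forall>k. Rk S T rho val sigma k s \<le> U s" using assms(5) by blast
  show ?thesis
    by (rule LIMSEQ_le_const2[OF Rk_tendsto[OF assms(1) assms(5)]]) (use * in blast)
qed

lemma H_closed:
  assumes "strat sigma" "closedC sigma C" "s \<in> C"
  shows "H sigma s = 0"
proof -
  have "\<And>s. s \<in> C \<Longrightarrow> Rk S T rho val sigma k s = 0" for k
  proof (induction k)
    case 0 then show ?case using assms(2) unfolding closedC_def by (auto simp: Rk_0)
  next
    case (Suc k)
    have sST: "s \<in> S - T" using assms(2) Suc.prems unfolding closedC_def by auto
    have sA: "sigma s \<in> A" using assms(1) sST unfolding strat_def by blast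
    have "\<And>s'. s' \<in> S \<Longrightarrow> val s (sigma s) s' * Rk S T rho val sigma k s' = 0"
    proof -
      fix s' assume s'S: "s' \<in> S"
      show "val s (sigma s) s' * Rk S T rho val sigma k s' = 0"
      proof (cases "0 < val s (sigma s) s'")
        case True then have "s' \<in> C" using assms(2) Suc.prems s'S unfolding closedC_def by blast
        then show ?thesis using Suc.IH by simp
      next
        case False then have "val s (sigma s) s' = 0" using nonneg[OF sST sA s'S] by simp
        then show ?thesis by simp
      qed
    qed
    then have "(\<Sum>s'\<in>S. val s (sigma s) s' * Rk S T rho val sigma k s') = 0"
      by (intro sum.neutral) blast
    then show ?case using sST by (simp add: Rk_Suc)
  qed
  moreover have "s \<in> S" using assms(2,3) unfolding closedC_def by auto
  ultimately have "(\<lambda>k. Rk S T rho val sigma k s) = (\<lambda>k. 0)" "s \<in> S" using assms(3) by auto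
  then have "(\<lambda>k. Rk S T rho val sigma k s) \<longlonglongrightarrow> H sigma s" "(\<lambda>k. Rk S T rho val sigma k s) \<longlonglongrightarrow> 0"
    using Rk_tendsto[OF assms(1), of s] by auto
  then show ?thesis by (rule LIMSEQ_unique)
qed

end


lemma avg_le:
  fixes p f :: "'x \<Rightarrow> real"
  assumes "finite X" "\<And>y. y \<in> X \<Longrightarrow> 0 \<le> p y" "sum p X \<le> 1"
    "\<And>y. y \<in> X \<Longrightarrow> 0 < p y \<Longrightarrow> f y \<le> m" "0 \<le> m"
  shows "(\<Sum>y\<in>X. p y * f y) \<le> m"
proof -
  have "(\<Sum>y\<in>X. p y * f y) \<le> (\<Sum>y\<in>X. p y * m)"
  proof (rule sum_mono)
    fix y assume y: "y \<in> X"
    show "p y * f y \<le> p y * m"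
    proof (cases "0 < p y")
      case True then show ?thesis using assms(4)[OF y] by simp
    next
      case False then have "p y = 0" using assms(2)[OF y] by simp
      then show ?thesis by simp
    qed
  qed
  also have "\<dots> = sum p X * m" by (rule sum_distrib_right[symmetric])
  also have "\<dots> = m * sum p X" by simp
  also have "\<dots> \<le> m" using assms(3,5) by (simp add: mult_left_le)
  finally show ?thesis .
qed

lemma avg_eq:
  fixes p f :: "'x \<Rightarrow> real"
  assumes "finite X" "\<And>y. y \<in> X \<Longrightarrow> 0 \<le> p y" "sum p X \<le> 1"
    "\<And>y. y \<in> X \<Longrightarrow> 0 < p y \<Longrightarrow> f y \<le> m" "0 \<le> m"
    "m \<le> (\<Sum>y\<in>X. p y * f y)" "y \<in> X" "0 < p y"
  shows "f y = m"
proof -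
  have nn: "\<And>z. z \<in> X \<Longrightarrow> 0 \<le> p z * (m - f z)"
  proof -
    fix z assume z: "z \<in> X"
    show "0 \<le> p z * (m - f z)"
    proof (cases "0 < p z")
      case True then show ?thesis using assms(4)[OF z] by simp
    next
      case False then have "p z = 0" using assms(2)[OF z] by simp
      then show ?thesis by simp
    qed
  qed
  have "(\<Sum>z\<in>X. p z * (m - f z)) = m * sum p X - (\<Sum>z\<in>X. p z * f z)"
  proof -
    have "(\<Sum>z\<in>X. p z * m) = sum p X * m" by (rule sum_distrib_right[symmetric])
    then show ?thesis by (simp add: right_diff_distrib sum_subtractf mult.commute)
  qed
  also have "\<dots> \<le> 0"
  proof -
    have "m * sum p X \<le> m" using assms(3,5) by (rule mult_left_le)
    then show ?thesis using assms(6) by linarith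
  qed
  finally have le0: "(\<Sum>z\<in>X. p z * (m - f z)) \<le> 0" .
  have ge0: "0 \<le> (\<Sum>z\<in>X. p z * (m - f z))" by (rule sum_nonneg) (rule nn)
  have "(\<Sum>z\<in>X. p z * (m - f z)) = 0" using le0 ge0 by linarith
  moreover have "((\<Sum>z\<in>X. p z * (m - f z)) = 0) = (\<forall>z\<in>X. p z * (m - f z) = 0)"
    by (rule sum_nonneg_eq_0_iff[OF assms(1)]) (rule nn)
  ultimately have "\<forall>z\<in>X. p z * (m - f z) = 0" by simp
  then have "p y * (m - f y) = 0" using assms(7) by blast
  then show ?thesis using assms(8) by simp
qed

context pm
begin

lemma strat_PiE: "sigma \<in> (S - T) \<rightarrow>\<^sub>E A \<Longrightarrow> strat sigma"
  unfolding strat_def by auto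

lemma H_lower:
  assumes st: "strat sigma"
    and Usub: "\<And>s. s \<in> S - T \<Longrightarrow> U s \<le> (\<Sum>s'\<in>S. val s (sigma s) s' * U s')"
    and UT: "\<And>s. s \<in> T \<Longrightarrow> U s \<le> rho s"
    and Ucl: "\<And>C s. closedC sigma C \<Longrightarrow> s \<in> C \<Longrightarrow> U s \<le> 0"
    and s: "s \<in> S"
  shows "U s \<le> H sigma s"
proof (rule ccontr)
  assume "\<not> U s \<le> H sigma s"
  define D where "D x = U x - H sigma x" for x
  have Ds: "0 < D s" using \<open>\<not> U s \<le> H sigma s\<close> unfolding D_def by simp
  define M where "M = Max (D ` S)"
  have fin: "finite (D ` S)" using finS by simp
  have DM: "\<And>x. x \<in> S \<Longrightarrow> D x \<le> M" unfolding M_def using fin by simp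
  have Mpos: "0 < M" using DM[OF s] Ds by simp
  have "M \<in> D ` S" unfolding M_def using fin s by (intro Max_in) auto
  then obtain x0 where x0: "x0 \<in> S" "D x0 = M" by auto
  define C where "C = {x\<in>S. D x = M}"
  have CT: "C \<subseteq> S - T"
  proof
    fix x assume x: "x \<in> C"
    have "x \<notin> T"
    proof
      assume "x \<in> T"
      then have "D x \<le> 0" unfolding D_def using UT H_T[OF st] by simp
      then show False using x Mpos unfolding C_def by simp
    qed
    then show "x \<in> S - T" using x unfolding C_def by simp
  qed
  have "closedC sigma C"
    unfolding closedC_def
  proof (intro conjI CT ballI impI)
    fix x s' assume x: "x \<in> C" and s': "s' \<in> S" and pos: "0 < val x (sigma x) s'"
    have xST: "x \<in> S - T" using x CT by blast
    have xA: "sigma x \<in> A" using st xST unfolding strat_def by blast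
    have "D x \<le> (\<Sum>y\<in>S. val x (sigma x) y * U y) - (\<Sum>y\<in>S. val x (sigma x) y * H sigma y)"
      using Usub[OF xST] H_harm[OF st xST] unfolding D_def by simp
    also have "\<dots> = (\<Sum>y\<in>S. val x (sigma x) y * D y)"
      unfolding D_def by (simp add: right_diff_distrib sum_subtractf)
    finally have "M \<le> (\<Sum>y\<in>S. val x (sigma x) y * D y)" using x unfolding C_def by simp
    then have "D s' = M"
      by (intro avg_eq[where X=S and p="val x (sigma x)" and f=D])
         (use finS nonneg[OF xST xA] rowsum[OF xST xA] DM Mpos s' pos in auto)
    then show "s' \<in> C" using s' unfolding C_def by simp
  qed
  moreover have "x0 \<in> C" using x0 unfolding C_def by simp
  ultimately have "U x0 \<le> 0" using Ucl by blast
  moreover have "0 \<le> H sigma x0" using H_nonneg[OF st x0(1)] .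
  ultimately show False using x0 Mpos unfolding D_def by simp
qed

definition goodU :: "('s \<Rightarrow> 'a) \<Rightarrow> ('s \<Rightarrow> real) \<Rightarrow> bool" where
  "goodU sigma U \<longleftrightarrow> sigma \<in> (S - T) \<rightarrow>\<^sub>E A \<and> (\<forall>s\<in>S. 0 \<le> U s) \<and>
     (\<forall>s\<in>S - T. \<forall>a\<in>A. (\<Sum>s'\<in>S. val s a s' * U s') \<le> U s) \<and>
     (\<forall>s\<in>S - T. U s = (\<Sum>s'\<in>S. val s (sigma s) s' * U s')) \<and>
     (\<forall>C. closedC sigma C \<longrightarrow> (\<forall>s\<in>C. U s = 0))"

definition vlv :: "('s \<Rightarrow> real) \<Rightarrow> ('s + ('s \<times> 'a)) \<Rightarrow> real" where
  "vlv U x = (case x of Inl s \<Rightarrow> U s | Inr (s, a) \<Rightarrow> (\<Sum>s'\<in>S. val s a s' * U s'))"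

lemma VL:
  assumes g: "goodU sigma0 U" and UT: "\<And>t. t \<in> T \<Longrightarrow> U t = rho t"
    and x: "x \<in> vertices S A T"
  shows "Rew_opt S A T rho val x = vlv U x"
proof -
  have s0: "sigma0 \<in> (S - T) \<rightarrow>\<^sub>E A" and U0: "\<And>s. s \<in> S \<Longrightarrow> 0 \<le> U s"
    and Usup: "\<And>s a. s \<in> S - T \<Longrightarrow> a \<in> A \<Longrightarrow> (\<Sum>s'\<in>S. val s a s' * U s') \<le> U s"
    and Uh: "\<And>s. s \<in> S - T \<Longrightarrow> U s = (\<Sum>s'\<in>S. val s (sigma0 s) s' * U s')"
    and Ucl: "\<And>C s. closedC sigma0 C \<Longrightarrow> s \<in> C \<Longrightarrow> U s = 0"
    using g unfolding goodU_def by blast+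
  have up: "\<And>sigma s. sigma \<in> (S - T) \<rightarrow>\<^sub>E A \<Longrightarrow> s \<in> S \<Longrightarrow> H sigma s \<le> U s"
  proof -
    fix sigma s assume sg: "sigma \<in> (S - T) \<rightarrow>\<^sub>E A" and s: "s \<in> S"
    have st: "strat sigma" using strat_PiE[OF sg] .
    show "H sigma s \<le> U s"
      by (rule H_upper[OF st U0]) (use UT Usup st s in \<open>auto simp: strat_def\<close>)
  qed
  have st0: "strat sigma0" using strat_PiE[OF s0] .
  have eq0: "\<And>s. s \<in> S \<Longrightarrow> H sigma0 s = U s"
  proof -
    fix s assume s: "s \<in> S"
    have "U s \<le> H sigma0 s"
      by (rule H_lower[OF st0]) (use Uh UT Ucl s in auto)
    then show "H sigma0 s = U s" using up[OF s0 s] by simp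
  qed
  have vle: "\<And>sigma. sigma \<in> (S - T) \<rightarrow>\<^sub>E A \<Longrightarrow> Rew_vertex S T rho val sigma x \<le> vlv U x"
  proof -
    fix sigma assume sg: "sigma \<in> (S - T) \<rightarrow>\<^sub>E A"
    show "Rew_vertex S T rho val sigma x \<le> vlv U x"
    proof (cases x)
      case (Inl s) then have "s \<in> S" using x unfolding vertices_def by auto
      then show ?thesis using Inl up[OF sg] unfolding Rew_vertex_def vlv_def by simp
    next
      case (Inr p)
      then obtain s a where p: "x = Inr (s, a)" by (cases p) auto
      then have sa: "s \<in> S - T" "a \<in> A" using x unfolding vertices_def by auto
      have "(\<Sum>s'\<in>S. val s a s' * H sigma s') \<le> (\<Sum>s'\<in>S. val s a s' * U s')"
        by (rule sum_mono, rule mult_left_mono) (use up[OF sg] nonneg[OF sa] in auto)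
      then show ?thesis using p unfolding Rew_vertex_def vlv_def by simp
    qed
  qed
  have veq: "Rew_vertex S T rho val sigma0 x = vlv U x"
  proof (cases x)
    case (Inl s) then have "s \<in> S" using x unfolding vertices_def by auto
    then show ?thesis using Inl eq0 unfolding Rew_vertex_def vlv_def by simp
  next
    case (Inr p)
    then obtain s a where p: "x = Inr (s, a)" by (cases p) auto
    have "(\<Sum>s'\<in>S. val s a s' * H sigma0 s') = (\<Sum>s'\<in>S. val s a s' * U s')"
      by (rule sum.cong) (use eq0 in auto)
    then show ?thesis using p unfolding Rew_vertex_def vlv_def by simp
  qed
  have fin: "finite ((S - T) \<rightarrow>\<^sub>E A)" using finS finA by (intro finite_PiE) auto
  show ?thesis unfolding Rew_opt_def
  proof (rule Max_eqI)
    show "finite ((\<lambda>sigma. Rew_vertex S T rho val sigma x) ` ((S - T) \<rightarrow>\<^sub>E A))" using fin by simp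
    show "\<And>y. y \<in> (\<lambda>sigma. Rew_vertex S T rho val sigma x) ` ((S - T) \<rightarrow>\<^sub>E A) \<Longrightarrow> y \<le> vlv U x"
      using vle by blast
    show "vlv U x \<in> (\<lambda>sigma. Rew_vertex S T rho val sigma x) ` ((S - T) \<rightarrow>\<^sub>E A)"
      by (rule image_eqI[where x=sigma0]) (use veq s0 in auto)
  qed
qed

end


context pm
begin

lemma PI: "\<exists>sigma\<in>(S - T) \<rightarrow>\<^sub>E A. \<forall>s\<in>S - T. \<forall>a\<in>A. (\<Sum>s'\<in>S. val s a s' * H sigma s') \<le> H sigma s"
proof -
  define Sg where "Sg = (S - T) \<rightarrow>\<^sub>E A"
  have finSg: "finite Sg" unfolding Sg_def using finS finA by (intro finite_PiE) auto
  have neSg: "Sg \<noteq> {}" unfolding Sg_def using Ane by (simp add: PiE_eq_empty_iff)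
  define F where "F sg = (\<Sum>s\<in>S. H sg s)" for sg
  have "Max (F ` Sg) \<in> F ` Sg" using finSg neSg by (intro Max_in) auto
  then obtain sigma where sigma: "sigma \<in> Sg" and Fs: "F sigma = Max (F ` Sg)" by auto
  have Fmax: "\<And>sg. sg \<in> Sg \<Longrightarrow> F sg \<le> F sigma" unfolding Fs using finSg by simp
  have st: "strat sigma" using sigma strat_PiE unfolding Sg_def by blast
  show ?thesis
  proof (rule bexI[OF _ sigma[unfolded Sg_def]], rule ccontr)
    assume "\<not> (\<forall>s\<in>S - T. \<forall>a\<in>A. (\<Sum>s'\<in>S. val s a s' * H sigma s') \<le> H sigma s)"
    then obtain s0 a where s0: "s0 \<in> S - T" and a: "a \<in> A"
      and viol: "H sigma s0 < (\<Sum>s'\<in>S. val s0 a s' * H sigma s')" by force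
    define sigma' where "sigma' = sigma(s0 := a)"
    have sigma'Sg: "sigma' \<in> Sg" using sigma s0 a unfolding Sg_def sigma'_def
      by (auto simp: PiE_iff extensional_def)
    have st': "strat sigma'" using sigma'Sg strat_PiE unfolding Sg_def by blast
    have Hnn: "\<And>x. x \<in> S \<Longrightarrow> 0 \<le> H sigma x" using H_nonneg[OF st] .
    have cl: "\<And>C x. closedC sigma' C \<Longrightarrow> x \<in> C \<Longrightarrow> H sigma x \<le> 0"
    proof -
      fix C x assume C: "closedC sigma' C" and x: "x \<in> C"
      have CST: "C \<subseteq> S - T" using C unfolding closedC_def by blast
      have Ccl: "\<And>y s'. y \<in> C \<Longrightarrow> s' \<in> S \<Longrightarrow> 0 < val y (sigma' y) s' \<Longrightarrow> s' \<in> C"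
        using C unfolding closedC_def by blast
      show "H sigma x \<le> 0"
      proof (cases "s0 \<in> C")
        case False
        have "closedC sigma C" unfolding closedC_def
        proof (intro conjI CST ballI impI)
          fix y s' assume y: "y \<in> C" and s': "s' \<in> S" and p: "0 < val y (sigma y) s'"
          have "sigma' y = sigma y" using y False unfolding sigma'_def by auto
          then show "s' \<in> C" using Ccl[OF y s'] p by simp
        qed
        then show ?thesis using H_closed[OF st _ x] by simp
      next
        case True
        have finC: "finite C" using CST finS finite_subset by blast
        define m where "m = Max (H sigma ` C)"
        have Hm: "\<And>y. y \<in> C \<Longrightarrow> H sigma y \<le> m" unfolding m_def using finC by simp
        have "m \<in> H sigma ` C" unfolding m_def using finC True by (intro Max_in) auto
        then obtain y0 where y0: "y0 \<in> C" "H sigma y0 = m" by auto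
        have s0S: "s0 \<in> S" using s0 by blast
        have m_le: "m \<le> H sigma s0"
        proof (rule ccontr)
          assume "\<not> m \<le> H sigma s0"
          then have lt: "H sigma s0 < m" by simp
          have m0: "0 \<le> m" using Hnn[OF s0S] lt by simp
          define C' where "C' = {y\<in>C. H sigma y = m}"
          have "closedC sigma C'" unfolding closedC_def
          proof (intro conjI ballI impI)
            show "C' \<subseteq> S - T" using CST unfolding C'_def by blast
          next
            fix y s' assume y: "y \<in> C'" and s': "s' \<in> S" and p: "0 < val y (sigma y) s'"
            have yC: "y \<in> C" and Hy: "H sigma y = m" using y unfolding C'_def by auto
            have yne: "y \<noteq> s0" using Hy lt by auto
            then have sy: "sigma' y = sigma y" unfolding sigma'_def by simp
            have yST: "y \<in> S - T" using yC CST by blast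
            have yA: "sigma y \<in> A" using st yST unfolding strat_def by blast
            have s'C: "s' \<in> C" using Ccl[OF yC s'] p sy by simp
            have "H sigma s' = m"
            proof (rule avg_eq[where X=S and p="val y (sigma y)" and f="H sigma"])
              show "finite S" by (rule finS)
              show "\<And>z. z \<in> S \<Longrightarrow> 0 \<le> val y (sigma y) z" using nonneg[OF yST yA] .
              show "sum (val y (sigma y)) S \<le> 1" using rowsum[OF yST yA] .
              show "\<And>z. z \<in> S \<Longrightarrow> 0 < val y (sigma y) z \<Longrightarrow> H sigma z \<le> m"
                using Ccl[OF yC] sy Hm by simp
              show "0 \<le> m" by (rule m0)
              show "m \<le> (\<Sum>z\<in>S. val y (sigma y) z * H sigma z)" using H_harm[OF st yST] Hy by simp
              show "s' \<in> S" by (rule s')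
              show "0 < val y (sigma y) s'" by (rule p)
            qed
            then show "s' \<in> C'" using s'C unfolding C'_def by simp
          qed
          moreover have "y0 \<in> C'" using y0 unfolding C'_def by simp
          ultimately have "H sigma y0 = 0" using H_closed[OF st] by blast
          then show False using y0 lt Hnn[OF s0S] by simp
        qed
        have "(\<Sum>s'\<in>S. val s0 a s' * H sigma s') \<le> H sigma s0"
        proof (rule avg_le[where X=S])
          show "finite S" by (rule finS)
          show "\<And>z. z \<in> S \<Longrightarrow> 0 \<le> val s0 a z" using nonneg[OF s0 a] .
          show "sum (val s0 a) S \<le> 1" using rowsum[OF s0 a] .
          show "\<And>z. z \<in> S \<Longrightarrow> 0 < val s0 a z \<Longrightarrow> H sigma z \<le> H sigma s0"
          proof -
            fix z assume z: "z \<in> S" and p: "0 < val s0 a z"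
            have "sigma' s0 = a" unfolding sigma'_def by simp
            then have "z \<in> C" using Ccl[OF True z] p by simp
            then show "H sigma z \<le> H sigma s0" using Hm m_le by fastforce
          qed
          show "0 \<le> H sigma s0" using Hnn[OF s0S] .
        qed
        then show ?thesis using viol by simp
      qed
    qed
    have le: "\<And>x. x \<in> S \<Longrightarrow> H sigma x \<le> H sigma' x"
    proof -
      fix x assume x: "x \<in> S"
      show "H sigma x \<le> H sigma' x"
      proof (rule H_lower[OF st'])
        show "\<And>s. s \<in> S - T \<Longrightarrow> H sigma s \<le> (\<Sum>s'\<in>S. val s (sigma' s) s' * H sigma s')"
        proof -
          fix s assume s: "s \<in> S - T"
          show "H sigma s \<le> (\<Sum>s'\<in>S. val s (sigma' s) s' * H sigma s')"
          proof (cases "s = s0")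
            case True then show ?thesis using viol unfolding sigma'_def by simp
          next
            case False then show ?thesis using H_harm[OF st s] unfolding sigma'_def by simp
          qed
        qed
        show "\<And>s. s \<in> T \<Longrightarrow> H sigma s \<le> rho s" using H_T[OF st] by simp
        show "\<And>C s. closedC sigma' C \<Longrightarrow> s \<in> C \<Longrightarrow> H sigma s \<le> 0" using cl .
        show "x \<in> S" by (rule x)
      qed
    qed
    have s0S: "s0 \<in> S" using s0 by blast
    have "H sigma' s0 = (\<Sum>s'\<in>S. val s0 a s' * H sigma' s')"
      using H_harm[OF st' s0] unfolding sigma'_def by simp
    also have "\<dots> \<ge> (\<Sum>s'\<in>S. val s0 a s' * H sigma s')"
      by (rule sum_mono, rule mult_left_mono) (use le nonneg[OF s0 a] in auto)
    finally have strict: "H sigma s0 < H sigma' s0" using viol by simp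
    have "F sigma < F sigma'" unfolding F_def
      by (rule sum_strict_mono_ex1) (use finS le strict s0S in auto)
    then show False using Fmax[OF sigma'Sg] by simp
  qed
qed

lemma PI_good: "\<exists>sigma. goodU sigma (H sigma) \<and> (\<forall>t\<in>T. H sigma t = rho t)"
proof -
  obtain sigma where sg: "sigma \<in> (S - T) \<rightarrow>\<^sub>E A"
    and sup: "\<forall>s\<in>S - T. \<forall>a\<in>A. (\<Sum>s'\<in>S. val s a s' * H sigma s') \<le> H sigma s"
    using PI by blast
  have st: "strat sigma" using strat_PiE[OF sg] .
  have "goodU sigma (H sigma)" unfolding goodU_def
    using sg sup H_nonneg[OF st] H_harm[OF st] H_closed[OF st] by blast
  moreover have "\<forall>t\<in>T. H sigma t = rho t" using H_T[OF st] by blast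
  ultimately show ?thesis by blast
qed

end


lemma chain_le:
  fixes r :: "nat \<Rightarrow> real"
  assumes "\<forall>i<n. r i < r (Suc i)" "i \<le> j" "j \<le> n"
  shows "r i \<le> r j"
  using assms(2,3)
proof (induction j)
  case 0 then show ?case by simp
next
  case (Suc j)
  show ?case
  proof (cases "i = Suc j")
    case True then show ?thesis by simp
  next
    case False
    then have "r i \<le> r j" using Suc by simp
    also have "r j < r (Suc j)" using assms(1) Suc.prems by simp
    finally show ?thesis by simp
  qed
qed

lemma phi_exists:
  fixes r q :: "nat \<Rightarrow> real"
  shows "(\<forall>i<n. r i < r (Suc i)) \<Longrightarrow> (\<forall>i<n. q i < q (Suc i)) \<Longrightarrow>
    \<exists>phi. (\<forall>x y. x < y \<longrightarrow> phi x < phi y) \<and> (\<forall>i\<le>n. phi (r i) = q i)"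
proof (induction n)
  case 0
  show ?case by (rule exI[where x="\<lambda>x. x - r 0 + q 0"]) auto
next
  case (Suc n)
  then obtain phi where mono: "\<forall>x y. x < y \<longrightarrow> phi x < phi y" and vals: "\<forall>i\<le>n. phi (r i) = q i"
    by auto
  have rlt: "r n < r (Suc n)" and qlt: "q n < q (Suc n)" using Suc.prems by auto
  define c where "c = (q (Suc n) - q n) / (r (Suc n) - r n)"
  have c: "0 < c" unfolding c_def using rlt qlt by simp
  define psi where "psi x = (if x \<le> r n then phi x else q n + c * (x - r n))" for x
  have phile: "\<And>x. x \<le> r n \<Longrightarrow> phi x \<le> q n"
  proof -
    fix x assume "x \<le> r n"
    then have "phi x \<le> phi (r n)" using mono by (cases "x = r n") (auto intro: less_imp_le)
    then show "phi x \<le> q n" using vals by simp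
  qed
  have "\<forall>x y. x < y \<longrightarrow> psi x < psi y"
  proof (intro allI impI)
    fix x y :: real assume xy: "x < y"
    show "psi x < psi y"
    proof (cases "y \<le> r n")
      case True then show ?thesis using xy mono unfolding psi_def by simp
    next
      case False
      have py: "psi y = q n + c * (y - r n)" using False unfolding psi_def by simp
      show ?thesis
      proof (cases "x \<le> r n")
        case True
        have "q n < q n + c * (y - r n)" using c False by simp
        then show ?thesis using True phile[OF True] py unfolding psi_def by simp
      next
        case xF: False
        have "c * (x - r n) < c * (y - r n)" using c xy by simp
        then show ?thesis using xF py unfolding psi_def by simp
      qed
    qed
  qed
  moreover have "\<forall>i\<le>Suc n. psi (r i) = q i"
  proof (intro allI impI)
    fix i assume i: "i \<le> Suc n"
    show "psi (r i) = q i"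
    proof (cases "i = Suc n")
      case True
      have "c * (r (Suc n) - r n) = q (Suc n) - q n" unfolding c_def using rlt by simp
      then show ?thesis using True rlt unfolding psi_def by simp
    next
      case False
      then have "i \<le> n" using i by simp
      moreover have "r i \<le> r n" using chain_le[OF Suc.prems(1)] \<open>i \<le> n\<close> by simp
      ultimately show ?thesis using vals unfolding psi_def by simp
    qed
  qed
  ultimately show ?case by blast
qed

lemma dist_exists:
  fixes f :: "'x \<Rightarrow> real"
  assumes fin: "finite X" and ne: "X \<noteq> {}"
    and H: "(\<forall>x\<in>X. f x = y) \<or> ((\<exists>x\<in>X. f x < y) \<and> (\<exists>x\<in>X. y < f x))"
  shows "\<exists>d. (\<forall>x\<in>X. 0 < d x) \<and> sum d X = 1 \<and> (\<Sum>x\<in>X. d x * f x) = y"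
proof -
  define c where "c = real (card X)"
  have c: "0 < c" unfolding c_def using fin ne by (simp add: card_gt_0_iff)
  define u where "u = 1 / c"
  have u: "0 < u" unfolding u_def using c by simp
  have su: "sum (\<lambda>x. u) X = 1" unfolding u_def c_def using c c_def by simp
  define mu where "mu = (\<Sum>x\<in>X. u * f x)"
  show ?thesis
  proof (cases "mu = y")
    case True
    then show ?thesis using u su unfolding mu_def by (intro exI[where x="\<lambda>x. u"]) auto
  next
    case False
    have "\<exists>z\<in>X. (mu < y \<and> y < f z) \<or> (f z < y \<and> y < mu)"
    proof (cases "\<forall>x\<in>X. f x = y")
      case True
      then have "mu = (\<Sum>x\<in>X. u * y)" unfolding mu_def by simp
      also have "\<dots> = y" using su by (simp add: sum_distrib_right[symmetric])
      finally show ?thesis using False by simp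
    next
      case False
      then obtain x1 x2 where "x1 \<in> X" "f x1 < y" "x2 \<in> X" "y < f x2" using H by blast
      then show ?thesis using \<open>mu \<noteq> y\<close> by (cases "mu < y") auto
    qed
    then obtain z where z: "z \<in> X" and btw: "(mu < y \<and> y < f z) \<or> (f z < y \<and> y < mu)" by blast
    define l where "l = (y - mu) / (f z - mu)"
    have l0: "0 < l" and l1: "l < 1" unfolding l_def using btw
      by (auto simp: divide_simps)
    have lz: "l * (f z - mu) = y - mu" unfolding l_def using btw by auto
    define d where "d x = (1 - l) * u + (if x = z then l else 0)" for x
    have "\<forall>x\<in>X. 0 < d x" unfolding d_def using l0 l1 u by (auto intro: add_pos_nonneg)
    moreover have "sum d X = 1"
    proof -
      have "sum d X = (\<Sum>x\<in>X. (1 - l) * u) + (\<Sum>x\<in>X. (if x = z then l else 0))"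
        unfolding d_def by (rule sum.distrib)
      also have "\<dots> = (1 - l) * sum (\<lambda>x. u) X + l" using fin z by (simp add: sum_distrib_left)
      finally show ?thesis using su by simp
    qed
    moreover have "(\<Sum>x\<in>X. d x * f x) = y"
    proof -
      have "(\<Sum>x\<in>X. d x * f x) = (\<Sum>x\<in>X. (1 - l) * (u * f x) + (if x = z then l * f x else 0))"
        unfolding d_def by (rule sum.cong) (auto simp: algebra_simps)
      also have "\<dots> = (\<Sum>x\<in>X. (1 - l) * (u * f x)) + (\<Sum>x\<in>X. (if x = z then l * f x else 0))"
        by (rule sum.distrib)
      also have "\<dots> = (1 - l) * mu + l * f z" using fin z unfolding mu_def by (simp add: sum_distrib_left)
      also have "\<dots> = mu + l * (f z - mu)" by (simp add: algebra_simps)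
      finally show ?thesis using lz by simp
    qed
    ultimately show ?thesis by blast
  qed
qed

lemma gp_facts:
  assumes gp: "gp_val S A Delta T val" and D: "Delta \<subseteq> (S - T) \<times> A \<times> S"
    and s: "s \<in> S - T" and a: "a \<in> A"
  shows "\<And>s'. (0 < val s a s') = (s' \<in> succs Delta s a)"
    and "\<And>s'. 0 \<le> val s a s'"
    and "succs Delta s a \<subseteq> S"
    and "finite S \<Longrightarrow> sum (val s a) S = (if succs Delta s a = {} then 0 else 1)"
proof -
  have G: "(succs Delta s a \<noteq> {} \<longrightarrow>
           (\<forall>s'. (s' \<in> succs Delta s a \<longrightarrow> val s a s' > 0) \<and>
                 (s' \<notin> succs Delta s a \<longrightarrow> val s a s' = 0)) \<and>
           sum (val s a) (succs Delta s a) = 1) \<and>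
        (succs Delta s a = {} \<longrightarrow> (\<forall>s'. val s a s' = 0))"
    using gp s a unfolding gp_val_def by blast
  show "(0 < val s a s') = (s' \<in> succs Delta s a)" for s'
    using G by (cases "succs Delta s a = {}"; cases "s' \<in> succs Delta s a") auto
  show "\<And>s'. 0 \<le> val s a s'"
    using G by (cases "succs Delta s a = {}") (auto intro: less_imp_le, metis less_eq_real_def)
  show sub: "succs Delta s a \<subseteq> S" using D unfolding succs_def by auto
  assume fS: "finite S"
  show "sum (val s a) S = (if succs Delta s a = {} then 0 else 1)"
  proof (cases "succs Delta s a = {}")
    case True then show ?thesis using G by simp
  next
    case False
    have "sum (val s a) S = sum (val s a) (succs Delta s a)"
      by (rule sum.mono_neutral_right[OF fS sub]) (use G False in auto)
    then show ?thesis using G False by simp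
  qed
qed

lemma gp_pm:
  assumes "finite S" "T \<subseteq> S" "finite A" "A \<noteq> {}" "Delta \<subseteq> (S - T) \<times> A \<times> S"
    "gp_val S A Delta T val" "\<And>t. t \<in> T \<Longrightarrow> 0 \<le> rho t"
  shows "pm S A T val rho"
proof
  show "finite S" "T \<subseteq> S" "finite A" "A \<noteq> {}" using assms by auto
  show "\<And>s a s'. s \<in> S - T \<Longrightarrow> a \<in> A \<Longrightarrow> s' \<in> S \<Longrightarrow> 0 \<le> val s a s'"
    using gp_facts(2)[OF assms(6,5)] by blast
  show "\<And>s a. s \<in> S - T \<Longrightarrow> a \<in> A \<Longrightarrow> sum (val s a) S \<le> 1"
    using gp_facts(4)[OF assms(6,5) _ _ assms(1)] by simp
  show "\<And>t. t \<in> T \<Longrightarrow> 0 \<le> rho t" by (rule assms(7))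
qed


lemma transfer:
  assumes fS: "finite S" and TS: "T \<subseteq> S" and fA: "finite A" and Ane: "A \<noteq> {}"
    and D: "Delta \<subseteq> (S - T) \<times> A \<times> S"
    and gp: "gp_val S A Delta T val"
    and g: "pm.goodU S A T val sigma U"
    and phi: "\<forall>x y. x < y \<longrightarrow> phi x < phi y" and phi0: "phi 0 = 0"
    and rho': "\<And>t. t \<in> T \<Longrightarrow> rho' t = phi (U t)"
  shows "\<exists>val'. gp_val S A Delta T val' \<and>
     (\<forall>x\<in>vertices S A T. Rew_opt S A T rho' val' x = phi (pm.vlv S val U x))"
proof -
  interpret P: pm S A T val "\<lambda>_. 0" by (rule gp_pm[OF fS TS fA Ane D gp]) simp
  have sg: "sigma \<in> (S - T) \<rightarrow>\<^sub>E A" and U0: "\<And>s. s \<in> S \<Longrightarrow> 0 \<le> U s"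
    and Usup: "\<And>s a. s \<in> S - T \<Longrightarrow> a \<in> A \<Longrightarrow> (\<Sum>s'\<in>S. val s a s' * U s') \<le> U s"
    and Uh: "\<And>s. s \<in> S - T \<Longrightarrow> U s = (\<Sum>s'\<in>S. val s (sigma s) s' * U s')"
    and Ucl: "\<And>C s. pm.closedC S T val sigma C \<Longrightarrow> s \<in> C \<Longrightarrow> U s = 0"
    using g unfolding P.goodU_def by blast+
  have phimono: "\<And>x y. x \<le> y \<Longrightarrow> phi x \<le> phi y"
    using phi by (metis less_eq_real_def)
  define Q where "Q s a = (\<Sum>s'\<in>S. val s a s' * U s')" for s a
  have Qsucc: "\<And>s a. s \<in> S - T \<Longrightarrow> a \<in> A \<Longrightarrow> Q s a = (\<Sum>s'\<in>succs Delta s a. val s a s' * U s')"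
  proof -
    fix s a assume s: "s \<in> S - T" and a: "a \<in> A"
    show "Q s a = (\<Sum>s'\<in>succs Delta s a. val s a s' * U s')"
      unfolding Q_def
      by (rule sum.mono_neutral_right[OF fS gp_facts(3)[OF gp D s a]])
         (use gp_facts(1)[OF gp D s a] gp_facts(2)[OF gp D s a] in \<open>auto simp: less_eq_real_def\<close>)
  qed
  have ex: "\<forall>p. \<exists>d. (fst p \<in> S - T \<and> snd p \<in> A \<and> succs Delta (fst p) (snd p) \<noteq> {}) \<longrightarrow>
      (\<forall>x\<in>succs Delta (fst p) (snd p). 0 < d x) \<and> sum d (succs Delta (fst p) (snd p)) = 1 \<and>
      (\<Sum>x\<in>succs Delta (fst p) (snd p). d x * phi (U x)) = phi (Q (fst p) (snd p))"
  proof
    fix p :: "'a \<times> 'b"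
    obtain s a where p: "p = (s, a)" by (cases p)
    show "\<exists>d. (fst p \<in> S - T \<and> snd p \<in> A \<and> succs Delta (fst p) (snd p) \<noteq> {}) \<longrightarrow>
      (\<forall>x\<in>succs Delta (fst p) (snd p). 0 < d x) \<and> sum d (succs Delta (fst p) (snd p)) = 1 \<and>
      (\<Sum>x\<in>succs Delta (fst p) (snd p). d x * phi (U x)) = phi (Q (fst p) (snd p))"
    proof (cases "s \<in> S - T \<and> a \<in> A \<and> succs Delta s a \<noteq> {}")
      case False then show ?thesis using p by auto
    next
      case True
      then have s: "s \<in> S - T" and a: "a \<in> A" and ne: "succs Delta s a \<noteq> {}" by auto
      define X where "X = succs Delta s a"
      have XS: "X \<subseteq> S" unfolding X_def using gp_facts(3)[OF gp D s a] .
      have finX: "finite X" using XS fS finite_subset by blast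
      have pos: "\<And>x. x \<in> X \<Longrightarrow> 0 < val s a x" unfolding X_def using gp_facts(1)[OF gp D s a] by blast
      have sum1: "sum (val s a) X = 1"
        using gp_facts(4)[OF gp D s a fS] ne gp_facts(1)[OF gp D s a] unfolding X_def
        by (metis (no_types) Qsucc gp_val_def gp s a)
      have QX: "Q s a = (\<Sum>x\<in>X. val s a x * U x)" unfolding X_def using Qsucc[OF s a] .
      have dich: "(\<forall>x\<in>X. U x = Q s a) \<or> ((\<exists>x\<in>X. U x < Q s a) \<and> (\<exists>x\<in>X. Q s a < U x))"
      proof -
        have zero: "(\<Sum>x\<in>X. val s a x * (U x - Q s a)) = 0"
        proof -
          have "(\<Sum>x\<in>X. val s a x * (U x - Q s a)) = (\<Sum>x\<in>X. val s a x * U x) - sum (val s a) X * Q s a"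
            by (simp add: right_diff_distrib sum_subtractf sum_distrib_right)
          then show ?thesis using QX sum1 by simp
        qed
        have ge: "(\<forall>x\<in>X. Q s a \<le> U x) \<Longrightarrow> (\<forall>x\<in>X. U x = Q s a)"
        proof -
          assume H: "\<forall>x\<in>X. Q s a \<le> U x"
          have nn: "\<And>x. x \<in> X \<Longrightarrow> 0 \<le> val s a x * (U x - Q s a)"
            using H pos by (intro mult_nonneg_nonneg) (auto intro: less_imp_le)
          have "((\<Sum>x\<in>X. val s a x * (U x - Q s a)) = 0) = (\<forall>x\<in>X. val s a x * (U x - Q s a) = 0)"
            by (rule sum_nonneg_eq_0_iff[OF finX]) (rule nn)
          then have "\<forall>x\<in>X. val s a x * (U x - Q s a) = 0" using zero by simp
          then show "\<forall>x\<in>X. U x = Q s a" using pos by fastforce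
        qed
        have le: "(\<forall>x\<in>X. U x \<le> Q s a) \<Longrightarrow> (\<forall>x\<in>X. U x = Q s a)"
        proof -
          assume H: "\<forall>x\<in>X. U x \<le> Q s a"
          have nn: "\<And>x. x \<in> X \<Longrightarrow> 0 \<le> val s a x * (Q s a - U x)"
            using H pos by (intro mult_nonneg_nonneg) (auto intro: less_imp_le)
          have z2: "(\<Sum>x\<in>X. val s a x * (Q s a - U x)) = 0"
          proof -
            have "(\<Sum>x\<in>X. val s a x * (Q s a - U x)) = - (\<Sum>x\<in>X. val s a x * (U x - Q s a))"
              by (simp add: sum_negf[symmetric] algebra_simps)
            then show ?thesis using zero by simp
          qed
          have "((\<Sum>x\<in>X. val s a x * (Q s a - U x)) = 0) = (\<forall>x\<in>X. val s a x * (Q s a - U x) = 0)"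
            by (rule sum_nonneg_eq_0_iff[OF finX]) (rule nn)
          then have "\<forall>x\<in>X. val s a x * (Q s a - U x) = 0" using z2 by simp
          then show "\<forall>x\<in>X. U x = Q s a" using pos by fastforce
        qed
        show ?thesis using ge le by (meson not_le)
      qed
      have "(\<forall>x\<in>X. phi (U x) = phi (Q s a)) \<or>
            ((\<exists>x\<in>X. phi (U x) < phi (Q s a)) \<and> (\<exists>x\<in>X. phi (Q s a) < phi (U x)))"
        using dich phi by metis
      then obtain d where "(\<forall>x\<in>X. 0 < d x) \<and> sum d X = 1 \<and> (\<Sum>x\<in>X. d x * phi (U x)) = phi (Q s a)"
        using dist_exists[OF finX, of "\<lambda>x. phi (U x)" "phi (Q s a)"] ne unfolding X_def by blast
      then show ?thesis using p unfolding X_def by auto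
    qed
  qed
  obtain DD where DD: "\<And>p. (fst p \<in> S - T \<and> snd p \<in> A \<and> succs Delta (fst p) (snd p) \<noteq> {}) \<longrightarrow>
      (\<forall>x\<in>succs Delta (fst p) (snd p). 0 < DD p x) \<and> sum (DD p) (succs Delta (fst p) (snd p)) = 1 \<and>
      (\<Sum>x\<in>succs Delta (fst p) (snd p). DD p x * phi (U x)) = phi (Q (fst p) (snd p))"
    using choice[OF ex] by blast
  define val' where "val' s a s' =
     (if s \<in> S - T \<and> a \<in> A \<and> succs Delta s a \<noteq> {} \<and> s' \<in> succs Delta s a then DD (s, a) s' else 0)" for s a s'
  have DDsa: "\<And>s a. s \<in> S - T \<Longrightarrow> a \<in> A \<Longrightarrow> succs Delta s a \<noteq> {} \<Longrightarrow>
      (\<forall>x\<in>succs Delta s a. 0 < DD (s, a) x) \<and> sum (DD (s, a)) (succs Delta s a) = 1 \<and>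
      (\<Sum>x\<in>succs Delta s a. DD (s, a) x * phi (U x)) = phi (Q s a)"
    using DD by force
  have gp': "gp_val S A Delta T val'"
    unfolding gp_val_def
  proof (intro ballI conjI impI allI)
    fix s a s' assume s: "s \<in> S - T" and a: "a \<in> A"
    {
      assume ne: "succs Delta s a \<noteq> {}"
      show "s' \<in> succs Delta s a \<Longrightarrow> 0 < val' s a s'" using DDsa[OF s a ne] s a ne unfolding val'_def by auto
      show "s' \<notin> succs Delta s a \<Longrightarrow> val' s a s' = 0" unfolding val'_def by auto
    }
    {
      assume ne: "succs Delta s a \<noteq> {}"
      have "sum (val' s a) (succs Delta s a) = sum (DD (s, a)) (succs Delta s a)"
        by (rule sum.cong) (use s a ne in \<open>auto simp: val'_def\<close>)
      then show "sum (val' s a) (succs Delta s a) = 1" using DDsa[OF s a ne] by simp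
    }
    {
      assume "succs Delta s a = {}"
      then show "val' s a s' = 0" unfolding val'_def by auto
    }
  qed
  have rho'nn: "\<And>t. t \<in> T \<Longrightarrow> 0 \<le> rho' t"
    using rho' phimono U0 TS phi0 by (metis subsetD)
  interpret P': pm S A T val' rho'
    by (rule gp_pm[OF fS TS fA Ane D gp' rho'nn])
  have key: "\<And>s a. s \<in> S - T \<Longrightarrow> a \<in> A \<Longrightarrow> (\<Sum>s'\<in>S. val' s a s' * phi (U s')) = phi (Q s a)"
  proof -
    fix s a assume s: "s \<in> S - T" and a: "a \<in> A"
    show "(\<Sum>s'\<in>S. val' s a s' * phi (U s')) = phi (Q s a)"
    proof (cases "succs Delta s a = {}")
      case True
      then have "Q s a = 0" using Qsucc[OF s a] by simp
      moreover have "(\<Sum>s'\<in>S. val' s a s' * phi (U s')) = 0" using True unfolding val'_def by simp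
      ultimately show ?thesis using phi0 by simp
    next
      case ne: False
      have "(\<Sum>s'\<in>S. val' s a s' * phi (U s')) = (\<Sum>s'\<in>succs Delta s a. val' s a s' * phi (U s'))"
        by (rule sum.mono_neutral_right[OF fS gp_facts(3)[OF gp D s a]]) (auto simp: val'_def)
      also have "\<dots> = (\<Sum>x\<in>succs Delta s a. DD (s, a) x * phi (U x))"
        by (rule sum.cong) (use s a ne in \<open>auto simp: val'_def\<close>)
      also have "\<dots> = phi (Q s a)" using DDsa[OF s a ne] by simp
      finally show ?thesis .
    qed
  qed
  have good': "P'.goodU sigma (\<lambda>s. phi (U s))"
    unfolding P'.goodU_def
  proof (intro conjI ballI allI impI)
    show "sigma \<in> (S - T) \<rightarrow>\<^sub>E A" by (rule sg)
    fix s assume "s \<in> S"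
    then show "0 \<le> phi (U s)" using phimono[OF U0] phi0 by metis
  next
    fix s a assume s: "s \<in> S - T" and a: "a \<in> A"
    show "(\<Sum>s'\<in>S. val' s a s' * phi (U s')) \<le> phi (U s)"
      using key[OF s a] phimono[OF Usup[OF s a]] unfolding Q_def by simp
  next
    fix s assume s: "s \<in> S - T"
    have sA: "sigma s \<in> A" using sg s by auto
    show "phi (U s) = (\<Sum>s'\<in>S. val' s (sigma s) s' * phi (U s'))"
      using key[OF s sA] Uh[OF s] unfolding Q_def by simp
  next
    fix C s assume C: "P'.closedC sigma C" and s: "s \<in> C"
    have "pm.closedC S T val sigma C"
      unfolding P.closedC_def
    proof (intro conjI ballI impI)
      show "C \<subseteq> S - T" using C unfolding P'.closedC_def by blast
    next
      fix y s' assume y: "y \<in> C" and s': "s' \<in> S" and p: "0 < val y (sigma y) s'"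
      have yST: "y \<in> S - T" using C y unfolding P'.closedC_def by blast
      have yA: "sigma y \<in> A" using sg yST by auto
      have "s' \<in> succs Delta y (sigma y)" using gp_facts(1)[OF gp D yST yA] p by blast
      then have "0 < val' y (sigma y) s'" using gp' yST yA unfolding gp_val_def by blast
      then show "s' \<in> C" using C y s' unfolding P'.closedC_def by blast
    qed
    then show "phi (U s) = 0" using Ucl s phi0 by simp
  qed
  have "\<forall>x\<in>vertices S A T. Rew_opt S A T rho' val' x = phi (pm.vlv S val U x)"
  proof
    fix x assume x: "x \<in> vertices S A T"
    have "Rew_opt S A T rho' val' x = P'.vlv (\<lambda>s. phi (U s)) x"
      by (rule P'.VL[OF good' _ x]) (use rho' in simp)
    also have "\<dots> = phi (pm.vlv S val U x)"
    proof (cases x)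
      case (Inl s) then show ?thesis unfolding P'.vlv_def P.vlv_def by simp
    next
      case (Inr p)
      then obtain s a where p: "x = Inr (s, a)" by (cases p) auto
      then have sa: "s \<in> S - T" "a \<in> A" using x unfolding vertices_def by auto
      show ?thesis using key[OF sa] p unfolding P'.vlv_def P.vlv_def Q_def by simp
    qed
    finally show "Rew_opt S A T rho' val' x = phi (pm.vlv S val U x)" .
  qed
  then show ?thesis using gp' by blast
qed


definition DN :: "('s \<times> 'a \<times> 's) set \<Rightarrow> (nat \<Rightarrow> 's) \<Rightarrow> nat \<Rightarrow> 'a \<Rightarrow> 's \<Rightarrow> 's \<Rightarrow> ('s \<times> 'a \<times> 's) set" where
  "DN Delta t n act fin fail = Delta \<union> {(t i, act, fin) | i. 1 \<le> i \<and> i \<le> n}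
                  \<union> {(t i, act, t (i - 1)) | i. 1 \<le> i \<and> i \<le> n}
                  \<union> {(t 0, act, fail)}"

locale gadget =
  fixes S :: "'s set" and A :: "'a set" and Delta :: "('s \<times> 'a \<times> 's) set" and T :: "'s set"
    and n :: nat and t :: "nat \<Rightarrow> 's" and fin fail :: 's and act :: 'a
  assumes fS: "finite S" and TS: "T \<subseteq> S" and fA: "finite A" and Ane: "A \<noteq> {}"
    and D: "Delta \<subseteq> (S - T) \<times> A \<times> S"
    and T_def: "T = t ` {0..n}"
    and inj: "inj_on t {0..n}"
    and fresh: "fin \<notin> S" "fail \<notin> S" "fin \<noteq> fail" "act \<notin> A"
begin

abbreviation "SN \<equiv> S \<union> {fin, fail}"
abbreviation "AN \<equiv> insert act A"
abbreviation "DD \<equiv> DN Delta t n act fin fail"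
abbreviation "TN \<equiv> {fin, fail}"

lemma tS: "i \<le> n \<Longrightarrow> t i \<in> S" using TS T_def by auto
lemma tT: "i \<le> n \<Longrightarrow> t i \<in> T" using T_def by auto
lemma t_eq: "i \<le> n \<Longrightarrow> j \<le> n \<Longrightarrow> t i = t j \<longleftrightarrow> i = j"
  using inj unfolding inj_on_def by auto

lemma SN_TN: "SN - TN = S" using fresh by auto

lemma DN_sub: "DD \<subseteq> (SN - TN) \<times> AN \<times> SN"
  unfolding DN_def using D tS fresh SN_TN by auto

lemma succ_A: "s \<in> S - T \<Longrightarrow> a \<in> A \<Longrightarrow> succs DD s a = succs Delta s a"
  unfolding succs_def DN_def using fresh tT by auto

lemma succ_act_nonT: "s \<in> S - T \<Longrightarrow> succs DD s act = {}"
  unfolding succs_def DN_def using fresh tT D by auto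

lemma succ_T_A: "s \<in> T \<Longrightarrow> a \<in> A \<Longrightarrow> succs DD s a = {}"
  unfolding succs_def DN_def using fresh D by auto

lemma succ_t0: "succs DD (t 0) act = {fail}"
proof -
  have "\<And>i. 1 \<le> i \<Longrightarrow> i \<le> n \<Longrightarrow> t i \<noteq> t 0" using t_eq by fastforce
  moreover have "\<And>s'. (t 0, act, s') \<notin> Delta" using D tT by fastforce
  ultimately show ?thesis unfolding succs_def DN_def by fastforce
qed

lemma succ_ti: "1 \<le> i \<Longrightarrow> i \<le> n \<Longrightarrow> succs DD (t i) act = {fin, t (i - 1)}"
proof -
  assume i: "1 \<le> i" "i \<le> n"
  have "\<And>s'. (t i, act, s') \<notin> Delta" using D tT i by fastforce
  moreover have "t i \<noteq> t 0" using t_eq i by fastforce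
  moreover have "\<And>j. j \<le> n \<Longrightarrow> t j = t i \<longleftrightarrow> j = i" using t_eq i by blast
  ultimately show ?thesis unfolding succs_def DN_def using i by fastforce
qed

lemma sumN: "(\<Sum>s'\<in>SN. g s') = (\<Sum>s'\<in>S. g s') + g fin + g fail"
  using fS fresh by (simp add: sum.union_disjoint add_ac)


lemma NL:
  assumes gpN: "gp_val SN AN DD TN valN"
    and good: "pm.goodU S A T valN sigma U"
    and U0: "U (t 0) = 0"
    and Ugad: "\<And>i. 1 \<le> i \<Longrightarrow> i \<le> n \<Longrightarrow>
        U (t i) = valN (t i) act fin + valN (t i) act (t (i - 1)) * U (t (i - 1))"
    and x: "x \<in> vertices S A T"
  shows "Rew_opt SN AN TN (\<lambda>s. if s = fin then 1 else 0) valN x = pm.vlv S valN U x"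
proof -
  have gpM: "gp_val S A Delta T valN"
    unfolding gp_val_def
  proof (intro ballI)
    fix s a assume s: "s \<in> S - T" and a: "a \<in> A"
    have "s \<in> SN - TN" "a \<in> AN" using s a fresh by auto
    then have "(succs DD s a \<noteq> {} \<longrightarrow>
           (\<forall>s'. (s' \<in> succs DD s a \<longrightarrow> valN s a s' > 0) \<and>
                 (s' \<notin> succs DD s a \<longrightarrow> valN s a s' = 0)) \<and>
           sum (valN s a) (succs DD s a) = 1) \<and>
        (succs DD s a = {} \<longrightarrow> (\<forall>s'. valN s a s' = 0))"
      using gpN unfolding gp_val_def by blast
    then show "(succs Delta s a \<noteq> {} \<longrightarrow>
           (\<forall>s'. (s' \<in> succs Delta s a \<longrightarrow> valN s a s' > 0) \<and>
                 (s' \<notin> succs Delta s a \<longrightarrow> valN s a s' = 0)) \<and>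
           sum (valN s a) (succs Delta s a) = 1) \<and>
        (succs Delta s a = {} \<longrightarrow> (\<forall>s'. valN s a s' = 0))"
      using succ_A[OF s a] by simp
  qed
  interpret PM: pm S A T valN "\<lambda>_. 0" by (rule gp_pm[OF fS TS fA Ane D gpM]) simp
  have finSN: "finite SN" using fS by simp
  have TNSN: "TN \<subseteq> SN" by simp
  interpret PN: pm SN AN TN valN "\<lambda>s. if s = fin then 1 else 0"
    by (rule gp_pm[OF finSN TNSN _ _ DN_sub gpN]) (use fA in auto)
  have sg: "sigma \<in> (S - T) \<rightarrow>\<^sub>E A" and Unn: "\<And>s. s \<in> S \<Longrightarrow> 0 \<le> U s"
    and Usup: "\<And>s a. s \<in> S - T \<Longrightarrow> a \<in> A \<Longrightarrow> (\<Sum>s'\<in>S. valN s a s' * U s') \<le> U s"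
    and Uh: "\<And>s. s \<in> S - T \<Longrightarrow> U s = (\<Sum>s'\<in>S. valN s (sigma s) s' * U s')"
    and Ucl: "\<And>C s. PM.closedC sigma C \<Longrightarrow> s \<in> C \<Longrightarrow> U s = 0"
    using good unfolding PM.goodU_def by blast+
  define VN where "VN s = (if s = fin then 1 else if s = fail then 0 else U s)" for s
  define sigmaN where "sigmaN s = (if s \<in> S then (if s \<in> T then act else sigma s) else undefined)" for s
  have VNS: "\<And>s. s \<in> S \<Longrightarrow> VN s = U s" unfolding VN_def using fresh by auto
  have sST: "\<And>s. s \<in> S \<Longrightarrow> s \<in> SN - TN" using SN_TN by blast
  have zero_out: "\<And>s a s'. s \<in> S \<Longrightarrow> a \<in> AN \<Longrightarrow> s' \<notin> succs DD s a \<Longrightarrow> valN s a s' = 0"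
  proof -
    fix s a s' assume s: "s \<in> S" and a: "a \<in> AN" and s': "s' \<notin> succs DD s a"
    have "\<not> 0 < valN s a s'" using gp_facts(1)[OF gpN DN_sub sST[OF s] a] s' by blast
    moreover have "0 \<le> valN s a s'" using gp_facts(2)[OF gpN DN_sub sST[OF s] a] .
    ultimately show "valN s a s' = 0" by simp
  qed
  have pos_in: "\<And>s a s'. s \<in> S \<Longrightarrow> a \<in> AN \<Longrightarrow> s' \<in> succs DD s a \<Longrightarrow> 0 < valN s a s'"
    using gp_facts(1)[OF gpN DN_sub sST] by blast
  have sumSucc: "\<And>s a. s \<in> S \<Longrightarrow> a \<in> AN \<Longrightarrow>
      (\<Sum>s'\<in>SN. valN s a s' * VN s') = (\<Sum>s'\<in>succs DD s a. valN s a s' * VN s')"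
  proof -
    fix s a assume s: "s \<in> S" and a: "a \<in> AN"
    show "(\<Sum>s'\<in>SN. valN s a s' * VN s') = (\<Sum>s'\<in>succs DD s a. valN s a s' * VN s')"
      by (rule sum.mono_neutral_right[OF finSN gp_facts(3)[OF gpN DN_sub sST[OF s] a]])
         (use zero_out[OF s a] in auto)
  qed
  have sumA: "\<And>s a. s \<in> S - T \<Longrightarrow> a \<in> A \<Longrightarrow>
      (\<Sum>s'\<in>SN. valN s a s' * VN s') = (\<Sum>s'\<in>S. valN s a s' * U s')"
  proof -
    fix s a assume s: "s \<in> S - T" and a: "a \<in> A"
    have sS: "s \<in> S" and aN: "a \<in> AN" using s a by auto
    have "succs Delta s a \<subseteq> S" using D unfolding succs_def by auto
    then have "fin \<notin> succs DD s a" "fail \<notin> succs DD s a" using succ_A[OF s a] fresh by auto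
    then have "valN s a fin = 0" "valN s a fail = 0" using zero_out[OF sS aN] by auto
    then have "(\<Sum>s'\<in>SN. valN s a s' * VN s') = (\<Sum>s'\<in>S. valN s a s' * VN s')"
      using sumN[of "\<lambda>s'. valN s a s' * VN s'"] by simp
    also have "\<dots> = (\<Sum>s'\<in>S. valN s a s' * U s')" by (rule sum.cong) (auto simp: VNS)
    finally show "(\<Sum>s'\<in>SN. valN s a s' * VN s') = (\<Sum>s'\<in>S. valN s a s' * U s')" .
  qed
  have sumEmpty: "\<And>s a. s \<in> S \<Longrightarrow> a \<in> AN \<Longrightarrow> succs DD s a = {} \<Longrightarrow> (\<Sum>s'\<in>SN. valN s a s' * VN s') = 0"
    using sumSucc by simp
  have sumT: "\<And>s. s \<in> T \<Longrightarrow> (\<Sum>s'\<in>SN. valN s act s' * VN s') = U s"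
  proof -
    fix s assume "s \<in> T"
    then obtain i where i: "i \<le> n" and si: "s = t i" using T_def by auto
    have sS: "s \<in> S" using tS[OF i] si by simp
    show "(\<Sum>s'\<in>SN. valN s act s' * VN s') = U s"
    proof (cases "i = 0")
      case True
      then show ?thesis using sumSucc[OF sS] si succ_t0 U0 unfolding VN_def using fresh by simp
    next
      case False
      then have i1: "1 \<le> i" by simp
      have tS': "t (i - 1) \<in> S" using tS i by simp
      have ne: "fin \<noteq> t (i - 1)" using tS' fresh by auto
      have "(\<Sum>s'\<in>SN. valN s act s' * VN s') = (\<Sum>s'\<in>{fin, t (i - 1)}. valN s act s' * VN s')"
        using sumSucc[OF sS] si succ_ti[OF i1 i] by simp
      also have "\<dots> = valN s act fin * VN fin + valN s act (t (i - 1)) * VN (t (i - 1))"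
        using ne by simp
      also have "\<dots> = U s" using Ugad[OF i1 i] si VNS[OF tS'] unfolding VN_def by simp
      finally show ?thesis .
    qed
  qed
  have goodN: "PN.goodU sigmaN VN"
    unfolding PN.goodU_def
  proof (intro conjI ballI allI impI)
    show "sigmaN \<in> (SN - TN) \<rightarrow>\<^sub>E AN"
      unfolding SN_TN using sg unfolding sigmaN_def by (auto simp: PiE_iff extensional_def)
  next
    fix s assume "s \<in> SN" then show "0 \<le> VN s" unfolding VN_def using Unn by auto
  next
    fix s a assume s: "s \<in> SN - TN" and a: "a \<in> AN"
    have sS: "s \<in> S" using s SN_TN by blast
    show "(\<Sum>s'\<in>SN. valN s a s' * VN s') \<le> VN s"
    proof (cases "s \<in> T")
      case True
      show ?thesis
      proof (cases "a = act")
        case True then show ?thesis using sumT \<open>s \<in> T\<close> VNS[OF sS] by simp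
      next
        case False then have "a \<in> A" using a by simp
        then show ?thesis using sumEmpty[OF sS a succ_T_A[OF \<open>s \<in> T\<close>]] VNS[OF sS] Unn[OF sS] by simp
      qed
    next
      case False
      then have sST': "s \<in> S - T" using sS by simp
      show ?thesis
      proof (cases "a = act")
        case True then show ?thesis
          using sumEmpty[OF sS a] succ_act_nonT[OF sST'] VNS[OF sS] Unn[OF sS] by simp
      next
        case False then have "a \<in> A" using a by simp
        then show ?thesis using sumA[OF sST'] Usup[OF sST'] VNS[OF sS] by simp
      qed
    qed
  next
    fix s assume s: "s \<in> SN - TN"
    have sS: "s \<in> S" using s SN_TN by blast
    show "VN s = (\<Sum>s'\<in>SN. valN s (sigmaN s) s' * VN s')"
    proof (cases "s \<in> T")
      case True then show ?thesis using sumT VNS[OF sS] sS unfolding sigmaN_def by simp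
    next
      case False
      then have sST': "s \<in> S - T" using sS by simp
      have "sigma s \<in> A" using sg sST' by auto
      then show ?thesis using sumA[OF sST'] Uh[OF sST'] VNS[OF sS] sS False unfolding sigmaN_def by simp
    qed
  next
    fix C s assume C: "PN.closedC sigmaN C" and s: "s \<in> C"
    have CS: "C \<subseteq> S" using C SN_TN unfolding PN.closedC_def by blast
    have Ccl: "\<And>y s'. y \<in> C \<Longrightarrow> s' \<in> SN \<Longrightarrow> 0 < valN y (sigmaN y) s' \<Longrightarrow> s' \<in> C"
      using C unfolding PN.closedC_def by blast
    have CT: "C \<inter> T = {}"
    proof (rule ccontr)
      assume "C \<inter> T \<noteq> {}"
      then obtain y where y: "y \<in> C" "y \<in> T" by blast
      then obtain i where i: "i \<le> n" and yi: "y = t i" using T_def by auto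
      have yS: "y \<in> S" using y CS by blast
      have sy: "sigmaN y = act" using yS y unfolding sigmaN_def by simp
      have aN: "act \<in> AN" by simp
      show False
      proof (cases "i = 0")
        case True
        have "fail \<in> succs DD y act" using succ_t0 yi True by simp
        then have "0 < valN y act fail" using pos_in[OF yS aN] by blast
        then have "fail \<in> C" using Ccl[OF y(1)] sy by simp
        then show False using CS fresh by blast
      next
        case False
        have "fin \<in> succs DD y act" using succ_ti[of i] yi False i by simp
        then have "0 < valN y act fin" using pos_in[OF yS aN] by blast
        then have "fin \<in> C" using Ccl[OF y(1)] sy by simp
        then show False using CS fresh by blast
      qed
    qed
    have "PM.closedC sigma C"
      unfolding PM.closedC_def
    proof (intro conjI ballI impI)
      show "C \<subseteq> S - T" using CS CT by blast
    next
      fix y s' assume y: "y \<in> C" and s': "s' \<in> S" and p: "0 < valN y (sigma y) s'"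
      have "sigmaN y = sigma y" using y CS CT unfolding sigmaN_def by auto
      then show "s' \<in> C" using Ccl[OF y] s' p by simp
    qed
    then show "VN s = 0" using Ucl s VNS CS by auto
  qed
  have "Rew_opt SN AN TN (\<lambda>s. if s = fin then 1 else 0) valN x = PN.vlv VN x"
  proof (rule PN.VL[OF goodN])
    show "\<And>t. t \<in> TN \<Longrightarrow> VN t = (if t = fin then 1 else 0)" unfolding VN_def using fresh by auto
    show "x \<in> vertices SN AN TN" using x SN_TN unfolding vertices_def by auto
  qed
  also have "\<dots> = PM.vlv U x"
  proof (cases x)
    case (Inl s) then have "s \<in> S" using x unfolding vertices_def by auto
    then show ?thesis using Inl VNS unfolding PN.vlv_def PM.vlv_def by simp
  next
    case (Inr p)
    then obtain s a where p: "x = Inr (s, a)" by (cases p) auto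
    then have sa: "s \<in> S - T" "a \<in> A" using x unfolding vertices_def by auto
    show ?thesis using sumA[OF sa] p unfolding PN.vlv_def PM.vlv_def by simp
  qed
  finally show ?thesis .
qed

end


lemma gp_sum1:
  assumes "gp_val S A Delta T val" "s \<in> S - T" "a \<in> A" "succs Delta s a \<noteq> {}"
  shows "sum (val s a) (succs Delta s a) = 1"
proof -
  have "(succs Delta s a \<noteq> {} \<longrightarrow>
           (\<forall>s'. (s' \<in> succs Delta s a \<longrightarrow> val s a s' > 0) \<and>
                 (s' \<notin> succs Delta s a \<longrightarrow> val s a s' = 0)) \<and>
           sum (val s a) (succs Delta s a) = 1)"
    using assms(1,2,3) unfolding gp_val_def by blast
  then show ?thesis using assms(4) by blast
qed

fun rr :: "(nat \<Rightarrow> real) \<Rightarrow> (nat \<Rightarrow> real) \<Rightarrow> nat \<Rightarrow> real" where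
  "rr p q 0 = 0"
| "rr p q (Suc i) = p (Suc i) + q (Suc i) * rr p q i"

lemma rr_bounds:
  assumes "\<And>i. 1 \<le> i \<Longrightarrow> i \<le> n \<Longrightarrow> 0 < p i \<and> 0 < q i \<and> p i + q i = 1"
  shows "i \<le> n \<Longrightarrow> 0 \<le> rr p q i \<and> rr p q i < 1"
proof (induction i)
  case 0 then show ?case by simp
next
  case (Suc i)
  then have IH: "0 \<le> rr p q i" "rr p q i < 1" by auto
  have pq: "0 < p (Suc i)" "0 < q (Suc i)" "p (Suc i) + q (Suc i) = 1" using assms[of "Suc i"] Suc.prems by auto
  have a: "q (Suc i) * rr p q i < q (Suc i) * 1" using IH(2) pq(2) by (rule mult_strict_left_mono)
  have b: "0 \<le> q (Suc i) * rr p q i" using IH pq by simp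
  have "rr p q (Suc i) < 1" using a pq(3) by simp
  moreover have "0 \<le> rr p q (Suc i)" using b pq(1) by simp
  ultimately show ?case by simp
qed

lemma rr_mono:
  assumes "\<And>i. 1 \<le> i \<Longrightarrow> i \<le> n \<Longrightarrow> 0 < p i \<and> 0 < q i \<and> p i + q i = 1"
  shows "\<forall>i<n. rr p q i < rr p q (Suc i)"
proof (intro allI impI)
  fix i assume i: "i < n"
  have b: "rr p q i < 1" using rr_bounds[OF assms, of i] i by simp
  have pq: "0 < p (Suc i)" "p (Suc i) + q (Suc i) = 1" using assms[of "Suc i"] i by auto
  have "rr p q (Suc i) - rr p q i = p (Suc i) * (1 - rr p q i)"
  proof -
    have q1: "q (Suc i) = 1 - p (Suc i)" using pq by simp
    show ?thesis by (simp add: q1 algebra_simps)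
  qed
  moreover have "0 < p (Suc i) * (1 - rr p q i)" using b pq by simp
  ultimately show "rr p q i < rr p q (Suc i)" by simp
qed

lemma goodU_mono:
  assumes P1: "pm S A T val r1" and P2: "pm S A T val' r2"
    and eq: "\<And>s a s'. s \<in> S - T \<Longrightarrow> a \<in> A \<Longrightarrow> val s a s' = val' s a s'"
    and g: "pm.goodU S A T val sigma U"
  shows "pm.goodU S A T val' sigma U"
proof -
  have sg: "sigma \<in> (S - T) \<rightarrow>\<^sub>E A" and U0: "\<And>s. s \<in> S \<Longrightarrow> 0 \<le> U s"
    and Usup: "\<And>s a. s \<in> S - T \<Longrightarrow> a \<in> A \<Longrightarrow> (\<Sum>s'\<in>S. val s a s' * U s') \<le> U s"
    and Uh: "\<And>s. s \<in> S - T \<Longrightarrow> U s = (\<Sum>s'\<in>S. val s (sigma s) s' * U s')"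
    and Ucl: "\<And>C s. pm.closedC S T val sigma C \<Longrightarrow> s \<in> C \<Longrightarrow> U s = 0"
    using g unfolding pm.goodU_def[OF P1] by blast+
  have sA: "\<And>s. s \<in> S - T \<Longrightarrow> sigma s \<in> A" using sg by auto
  show ?thesis unfolding pm.goodU_def[OF P2]
  proof (intro conjI ballI allI impI)
    show "sigma \<in> (S - T) \<rightarrow>\<^sub>E A" by (rule sg)
  next
    fix s assume "s \<in> S" then show "0 \<le> U s" by (rule U0)
  next
    fix s a assume s: "s \<in> S - T" and a: "a \<in> A"
    have "(\<Sum>s'\<in>S. val' s a s' * U s') = (\<Sum>s'\<in>S. val s a s' * U s')" using eq[OF s a] by simp
    then show "(\<Sum>s'\<in>S. val' s a s' * U s') \<le> U s" using Usup[OF s a] by simp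
  next
    fix s assume s: "s \<in> S - T"
    have "(\<Sum>s'\<in>S. val' s (sigma s) s' * U s') = (\<Sum>s'\<in>S. val s (sigma s) s' * U s')"
      using eq[OF s sA[OF s]] by simp
    then show "U s = (\<Sum>s'\<in>S. val' s (sigma s) s' * U s')" using Uh[OF s] by simp
  next
    fix C s assume C: "pm.closedC S T val' sigma C" and s: "s \<in> C"
    have "pm.closedC S T val sigma C"
      unfolding pm.closedC_def[OF P1]
    proof (intro conjI ballI impI)
      show "C \<subseteq> S - T" using C unfolding pm.closedC_def[OF P2] by blast
    next
      fix y s' assume y: "y \<in> C" and s': "s' \<in> S" and p: "0 < val y (sigma y) s'"
      have yST: "y \<in> S - T" using C y unfolding pm.closedC_def[OF P2] by blast
      have "0 < val' y (sigma y) s'" using p eq[OF yST sA[OF yST]] by simp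
      then show "s' \<in> C" using C y s' unfolding pm.closedC_def[OF P2] by blast
    qed
    then show "U s = 0" using Ucl s by blast
  qed
qed

lemma goodU_scale:
  assumes P1: "pm S A T val r1" and g: "pm.goodU S A T val sigma U" and c: "0 \<le> c"
  shows "pm.goodU S A T val sigma (\<lambda>s. c * U s)"
proof -
  have sg: "sigma \<in> (S - T) \<rightarrow>\<^sub>E A" and U0: "\<And>s. s \<in> S \<Longrightarrow> 0 \<le> U s"
    and Usup: "\<And>s a. s \<in> S - T \<Longrightarrow> a \<in> A \<Longrightarrow> (\<Sum>s'\<in>S. val s a s' * U s') \<le> U s"
    and Uh: "\<And>s. s \<in> S - T \<Longrightarrow> U s = (\<Sum>s'\<in>S. val s (sigma s) s' * U s')"
    and Ucl: "\<And>C s. pm.closedC S T val sigma C \<Longrightarrow> s \<in> C \<Longrightarrow> U s = 0"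
    using g unfolding pm.goodU_def[OF P1] by blast+
  have sc: "\<And>s a. (\<Sum>s'\<in>S. val s a s' * (c * U s')) = c * (\<Sum>s'\<in>S. val s a s' * U s')"
    by (simp add: sum_distrib_left mult.left_commute)
  show ?thesis unfolding pm.goodU_def[OF P1]
  proof (intro conjI ballI allI impI)
    show "sigma \<in> (S - T) \<rightarrow>\<^sub>E A" by (rule sg)
  next
    fix s assume "s \<in> S" then show "0 \<le> c * U s" using U0 c by simp
  next
    fix s a assume s: "s \<in> S - T" and a: "a \<in> A"
    show "(\<Sum>s'\<in>S. val s a s' * (c * U s')) \<le> c * U s"
      unfolding sc using Usup[OF s a] c by (rule mult_left_mono)
  next
    fix s assume s: "s \<in> S - T"
    show "c * U s = (\<Sum>s'\<in>S. val s (sigma s) s' * (c * U s'))" unfolding sc using Uh[OF s] by simp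
  next
    fix C s assume "pm.closedC S T val sigma C" "s \<in> C"
    then show "c * U s = 0" using Ucl by simp
  qed
qed

context gadget
begin

lemma gpM_of_gpN:
  assumes gpN: "gp_val SN AN DD TN valN"
  shows "gp_val S A Delta T valN"
  unfolding gp_val_def
proof (intro ballI)
  fix s a assume s: "s \<in> S - T" and a: "a \<in> A"
  have "s \<in> SN - TN" "a \<in> AN" using s a fresh by auto
  then have "(succs DD s a \<noteq> {} \<longrightarrow>
         (\<forall>s'. (s' \<in> succs DD s a \<longrightarrow> valN s a s' > 0) \<and>
               (s' \<notin> succs DD s a \<longrightarrow> valN s a s' = 0)) \<and>
         sum (valN s a) (succs DD s a) = 1) \<and>
      (succs DD s a = {} \<longrightarrow> (\<forall>s'. valN s a s' = 0))"
    using gpN unfolding gp_val_def by blast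
  then show "(succs Delta s a \<noteq> {} \<longrightarrow>
         (\<forall>s'. (s' \<in> succs Delta s a \<longrightarrow> valN s a s' > 0) \<and>
               (s' \<notin> succs Delta s a \<longrightarrow> valN s a s' = 0)) \<and>
         sum (valN s a) (succs Delta s a) = 1) \<and>
      (succs Delta s a = {} \<longrightarrow> (\<forall>s'. valN s a s' = 0))"
    using succ_A[OF s a] by simp
qed

lemma dir1:
  fixes rho :: "'s \<Rightarrow> real"
  assumes rho0: "rho (t 0) = 0" and rho_mono: "\<forall>i<n. rho (t i) < rho (t (Suc i))"
    and v: "v \<in> vertices S A T" and W: "W \<subseteq> vertices S A T"
    and NW: "never_worse S A Delta T rho v W"
  shows "never_worse SN AN DD TN (\<lambda>s. if s = fin then 1 else 0) v W"
  unfolding never_worse_def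
proof (intro allI impI)
  fix valN assume gpN: "gp_val SN AN DD TN valN"
  have gpM: "gp_val S A Delta T valN" by (rule gpM_of_gpN[OF gpN])
  define p where "p i = valN (t i) act fin" for i
  define q where "q i = valN (t i) act (t (i - 1))" for i
  have pq: "\<And>i. 1 \<le> i \<Longrightarrow> i \<le> n \<Longrightarrow> 0 < p i \<and> 0 < q i \<and> p i + q i = 1"
  proof -
    fix i assume i1: "1 \<le> i" and i: "i \<le> n"
    have ts: "t i \<in> SN - TN" using tS[OF i] SN_TN by blast
    have aN: "act \<in> AN" by simp
    have sc: "succs DD (t i) act = {fin, t (i - 1)}" by (rule succ_ti[OF i1 i])
    have "i - 1 \<le> n" using i by simp
    then have "t (i - 1) \<in> S" by (rule tS)
    then have ne: "fin \<noteq> t (i - 1)" using fresh by auto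
    have "0 < p i" "0 < q i" using gp_facts(1)[OF gpN DN_sub ts aN] sc unfolding p_def q_def by auto
    moreover have "sum (valN (t i) act) (succs DD (t i) act) = 1"
      by (rule gp_sum1[OF gpN ts aN]) (simp add: sc)
    then have "p i + q i = 1" using sc ne unfolding p_def q_def by simp
    ultimately show "0 < p i \<and> 0 < q i \<and> p i + q i = 1" by blast
  qed
  define r where "r = rr p q"
  have rmono: "\<forall>i<n. r i < r (Suc i)" unfolding r_def by (rule rr_mono[where n=n and p=p and q=q, OF pq])
  have rnn: "\<And>i. i \<le> n \<Longrightarrow> 0 \<le> r i" unfolding r_def using rr_bounds[where n=n and p=p and q=q, OF pq] by blast
  define om where "om s = r (the_inv_into {0..n} t s)" for s
  have om_t: "\<And>i. i \<le> n \<Longrightarrow> om (t i) = r i"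
    unfolding om_def using the_inv_into_f_f[OF inj] by simp
  have om_nn: "\<And>s. s \<in> T \<Longrightarrow> 0 \<le> om s" using T_def om_t rnn by auto
  interpret PM: pm S A T valN om by (rule gp_pm[OF fS TS fA Ane D gpM om_nn])
  obtain sigma where good: "PM.goodU sigma (Rew_state S T om valN sigma)"
    and HT: "\<forall>t\<in>T. Rew_state S T om valN sigma t = om t"
    using PM.PI_good by blast
  define U where "U = Rew_state S T om valN sigma"
  have Ut: "\<And>i. i \<le> n \<Longrightarrow> U (t i) = r i" using HT om_t tT unfolding U_def by simp
  have NLx: "\<And>x. x \<in> vertices S A T \<Longrightarrow>
      Rew_opt SN AN TN (\<lambda>s. if s = fin then 1 else 0) valN x = pm.vlv S valN U x"
  proof (rule NL[OF gpN])
    show "pm.goodU S A T valN sigma U" using good unfolding U_def .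
    show "U (t 0) = 0" using Ut[of 0] unfolding r_def by simp
    show "\<And>i. 1 \<le> i \<Longrightarrow> i \<le> n \<Longrightarrow>
        U (t i) = valN (t i) act fin + valN (t i) act (t (i - 1)) * U (t (i - 1))"
    proof -
      fix i assume i1: "1 \<le> i" and i: "i \<le> n"
      obtain j where j: "i = Suc j" using i1 by (cases i) auto
      show "U (t i) = valN (t i) act fin + valN (t i) act (t (i - 1)) * U (t (i - 1))"
        using Ut[OF i] Ut[of j] i j unfolding r_def p_def q_def by simp
    qed
  qed
  obtain phi where phi: "\<forall>x y. x < y \<longrightarrow> phi x < phi y" and phiv: "\<forall>i\<le>n. phi (r i) = rho (t i)"
    using phi_exists[OF rmono, of "\<lambda>i. rho (t i)"] rho_mono by blast
  have "phi (r 0) = rho (t 0)" using phiv by simp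
  moreover have "r 0 = 0" unfolding r_def by simp
  ultimately have phi0: "phi 0 = 0" using rho0 by simp
  have rhoT: "\<And>s. s \<in> T \<Longrightarrow> rho s = phi (U s)" using T_def Ut phiv by auto
  obtain val' where gp': "gp_val S A Delta T val'"
    and RV: "\<forall>x\<in>vertices S A T. Rew_opt S A T rho val' x = phi (pm.vlv S valN U x)"
    using transfer[OF fS TS fA Ane D gpM good[folded U_def] phi phi0 rhoT] by blast
  obtain w where w: "w \<in> W" and le: "Rew_opt S A T rho val' v \<le> Rew_opt S A T rho val' w"
    using NW gp' unfolding never_worse_def by blast
  have wV: "w \<in> vertices S A T" using w W by blast
  have "phi (pm.vlv S valN U v) \<le> phi (pm.vlv S valN U w)" using le RV v wV by simp
  then have "pm.vlv S valN U v \<le> pm.vlv S valN U w"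
  proof (rule contrapos_pp)
    assume "\<not> pm.vlv S valN U v \<le> pm.vlv S valN U w"
    then have "pm.vlv S valN U w < pm.vlv S valN U v" by simp
    then have "phi (pm.vlv S valN U w) < phi (pm.vlv S valN U v)" using phi by blast
    then show "\<not> phi (pm.vlv S valN U v) \<le> phi (pm.vlv S valN U w)" by simp
  qed
  then have "Rew_opt SN AN TN (\<lambda>s. if s = fin then 1 else 0) valN v \<le>
             Rew_opt SN AN TN (\<lambda>s. if s = fin then 1 else 0) valN w"
    using NLx[OF v] NLx[OF wV] by simp
  then show "\<exists>w\<in>W. Rew_opt SN AN TN (\<lambda>s. if s = fin then 1 else 0) valN v \<le>
             Rew_opt SN AN TN (\<lambda>s. if s = fin then 1 else 0) valN w" using w by blast
qed

end


lemma gp_clause_intro: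
  assumes "X \<noteq> {} \<Longrightarrow> (\<forall>s'. s' \<in> X \<longrightarrow> 0 < f s') \<and> (\<forall>s'. s' \<notin> X \<longrightarrow> f s' = 0) \<and> sum f X = 1"
    and "X = {} \<Longrightarrow> \<forall>s'. f s' = 0"
  shows "(X \<noteq> {} \<longrightarrow> (\<forall>s'. (s' \<in> X \<longrightarrow> f s' > 0) \<and> (s' \<notin> X \<longrightarrow> f s' = 0)) \<and> sum f X = 1) \<and>
         (X = {} \<longrightarrow> (\<forall>s'. f s' = 0))"
  using assms by blast

lemma chain_lt:
  fixes r :: "nat \<Rightarrow> real"
  assumes "\<forall>i<n. r i < r (Suc i)" "i < j" "j \<le> n"
  shows "r i < r j"
proof -
  have "r i < r (Suc i)" using assms by simp
  also have "r (Suc i) \<le> r j" using chain_le[OF assms(1), of "Suc i" j] assms by simp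
  finally show ?thesis .
qed

context gadget
begin

lemma dir2:
  fixes rho :: "'s \<Rightarrow> real"
  assumes rho0: "rho (t 0) = 0" and rho_mono: "\<forall>i<n. rho (t i) < rho (t (Suc i))"
    and v: "v \<in> vertices S A T" and W: "W \<subseteq> vertices S A T"
    and NW: "never_worse SN AN DD TN (\<lambda>s. if s = fin then 1 else 0) v W"
  shows "never_worse S A Delta T rho v W"
  unfolding never_worse_def
proof (intro allI impI)
  fix val assume gp: "gp_val S A Delta T val"
  have rnn: "\<And>i. i \<le> n \<Longrightarrow> 0 \<le> rho (t i)"
    using chain_le[where r="\<lambda>i. rho (t i)", OF rho_mono, of 0] rho0 by simp
  have rle: "\<And>i. i \<le> n \<Longrightarrow> rho (t i) \<le> rho (t n)"
    using chain_le[where r="\<lambda>i. rho (t i)", OF rho_mono] by simp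
  have rhoT: "\<And>s. s \<in> T \<Longrightarrow> 0 \<le> rho s" using T_def rnn by auto
  interpret PM: pm S A T val rho by (rule gp_pm[OF fS TS fA Ane D gp rhoT])
  obtain sigma where good: "PM.goodU sigma (Rew_state S T rho val sigma)"
    and HT: "\<forall>t\<in>T. Rew_state S T rho val sigma t = rho t"
    using PM.PI_good by blast
  define U0 where "U0 = Rew_state S T rho val sigma"
  define c where "c = 1 / (rho (t n) + 1)"
  have rn: "0 \<le> rho (t n)" using rnn by simp
  have c: "0 < c" unfolding c_def using rn by simp
  define r where "r i = c * rho (t i)" for i
  have r0: "r 0 = 0" unfolding r_def using rho0 by simp
  have r_lt1: "\<And>i. i \<le> n \<Longrightarrow> r i < 1"
  proof -
    fix i assume i: "i \<le> n"
    have "r i \<le> c * rho (t n)" unfolding r_def using rle[OF i] c by simp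
    also have "\<dots> < 1" unfolding c_def using rn by (simp add: divide_simps)
    finally show "r i < 1" .
  qed
  have r_step: "\<And>i. 1 \<le> i \<Longrightarrow> i \<le> n \<Longrightarrow> r (i - 1) < r i"
  proof -
    fix i assume i1: "1 \<le> i" and i: "i \<le> n"
    obtain j where j: "i = Suc j" using i1 by (cases i) auto
    then have "rho (t j) < rho (t (Suc j))" using rho_mono i by simp
    then show "r (i - 1) < r i" unfolding r_def using c j by simp
  qed
  define p where "p i = (r i - r (i - 1)) / (1 - r (i - 1))" for i
  have p_pos: "\<And>i. 1 \<le> i \<Longrightarrow> i \<le> n \<Longrightarrow> 0 < p i \<and> p i < 1"
  proof -
    fix i assume i1: "1 \<le> i" and i: "i \<le> n"
    have a: "r (i - 1) < r i" by (rule r_step[OF i1 i])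
    have b: "r (i - 1) < 1" using r_lt1[of "i - 1"] i by simp
    have d: "r i < 1" using r_lt1[OF i] .
    show "0 < p i \<and> p i < 1" unfolding p_def using a b d by (simp add: divide_simps)
  qed
  have p_eq: "\<And>i. 1 \<le> i \<Longrightarrow> i \<le> n \<Longrightarrow> p i + (1 - p i) * r (i - 1) = r i"
  proof -
    fix i assume i1: "1 \<le> i" and i: "i \<le> n"
    have "i - 1 \<le> n" using i by simp
    then have "r (i - 1) < 1" by (rule r_lt1)
    then have b: "1 - r (i - 1) \<noteq> 0" by simp
    have e1: "p i * (1 - r (i - 1)) = r i - r (i - 1)" unfolding p_def using b by simp
    have e2: "p i + (1 - p i) * r (i - 1) = r (i - 1) + p i * (1 - r (i - 1))"
      by (simp add: algebra_simps)
    show "p i + (1 - p i) * r (i - 1) = r i" using e1 e2 by simp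
  qed
  define idx where "idx s = the_inv_into {0..n} t s" for s
  have idx_t: "\<And>i. i \<le> n \<Longrightarrow> idx (t i) = i" unfolding idx_def using the_inv_into_f_f[OF inj] by simp
  define valN where "valN s a s' =
    (if a = act then
       (if s = t 0 then (if s' = fail then 1 else 0)
        else if s \<in> T then (if s' = fin then p (idx s) else if s' = t (idx s - 1) then 1 - p (idx s) else 0)
        else 0)
     else if s \<in> T then 0 else val s a s')" for s a s'
  have valN_eq: "\<And>s a s'. s \<in> S - T \<Longrightarrow> a \<in> A \<Longrightarrow> valN s a s' = val s a s'"
    unfolding valN_def using fresh by auto
  have t0T: "t 0 \<in> T" using tT by simp
  have gpN: "gp_val SN AN DD TN valN"
    unfolding gp_val_def
  proof (intro ballI)
    fix s a assume s: "s \<in> SN - TN" and a: "a \<in> AN"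
    have sS: "s \<in> S" using s SN_TN by blast
    show "(succs DD s a \<noteq> {} \<longrightarrow>
           (\<forall>s'. (s' \<in> succs DD s a \<longrightarrow> valN s a s' > 0) \<and>
                 (s' \<notin> succs DD s a \<longrightarrow> valN s a s' = 0)) \<and>
           sum (valN s a) (succs DD s a) = 1) \<and>
        (succs DD s a = {} \<longrightarrow> (\<forall>s'. valN s a s' = 0))"
    proof (rule gp_clause_intro)
      consider (t0) "a = act" "s = t 0" | (ti) "a = act" "s \<in> T" "s \<noteq> t 0" | (nT) "a = act" "s \<notin> T"
        | (TA) "a \<noteq> act" "s \<in> T" | (nTA) "a \<noteq> act" "s \<notin> T" by blast
      note cs = this
      {
        assume ne: "succs DD s a \<noteq> {}"
        show "(\<forall>s'. s' \<in> succs DD s a \<longrightarrow> 0 < valN s a s') \<and> (\<forall>s'. s' \<notin> succs DD s a \<longrightarrow> valN s a s' = 0) \<and>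
          sum (valN s a) (succs DD s a) = 1"
        proof (cases rule: cs)
          case t0
          have "\<And>s'. valN s a s' = (if s' = fail then 1 else 0)" unfolding valN_def using t0 by simp
          then show ?thesis using t0 succ_t0 by simp
        next
          case ti
          then obtain i where i: "i \<le> n" and si: "s = t i" using T_def by auto
          have i1: "1 \<le> i" using ti si by (cases i) auto
          have "t (i - 1) \<in> S" using i by (intro tS) simp
          then have ne2: "fin \<noteq> t (i - 1)" using fresh by auto
          have vv: "\<And>s'. valN s a s' = (if s' = fin then p i else if s' = t (i - 1) then 1 - p i else 0)"
            unfolding valN_def using ti si idx_t[OF i] by simp
          have sc: "succs DD s a = {fin, t (i - 1)}" using succ_ti[OF i1 i] si ti by simp
          show ?thesis using vv sc ne2 p_pos[OF i1 i] by auto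
        next
          case nT
          then have "succs DD s a = {}" using succ_act_nonT sS by simp
          then show ?thesis using ne by simp
        next
          case TA
          then have "succs DD s a = {}" using succ_T_A a by simp
          then show ?thesis using ne by simp
        next
          case nTA
          then have sST: "s \<in> S - T" and aA: "a \<in> A" using sS a by auto
          have sc: "succs DD s a = succs Delta s a" by (rule succ_A[OF sST aA])
          have "(\<forall>s'. s' \<in> succs Delta s a \<longrightarrow> 0 < val s a s') \<and> (\<forall>s'. s' \<notin> succs Delta s a \<longrightarrow> val s a s' = 0) \<and>
            sum (val s a) (succs Delta s a) = 1"
            using gp sST aA ne sc unfolding gp_val_def by auto
          moreover have "\<And>s'. valN s a s' = val s a s'" using valN_eq[OF sST aA] .
          ultimately show ?thesis using sc by simp
        qed
      }
      {
        assume em: "succs DD s a = {}"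
        show "\<forall>s'. valN s a s' = 0"
        proof (cases rule: cs)
          case t0 then show ?thesis using em succ_t0 by simp
        next
          case ti
          then obtain i where i: "i \<le> n" and si: "s = t i" using T_def by auto
          have i1: "1 \<le> i" using ti si by (cases i) auto
          show ?thesis using em succ_ti[OF i1 i] si ti by simp
        next
          case nT then show ?thesis unfolding valN_def using t0T by auto
        next
          case TA then show ?thesis unfolding valN_def by auto
        next
          case nTA
          then have sST: "s \<in> S - T" and aA: "a \<in> A" using sS a by auto
          have "succs Delta s a = {}" using em succ_A[OF sST aA] by simp
          then have "\<forall>s'. val s a s' = 0" using gp sST aA unfolding gp_val_def by blast
          then show ?thesis using valN_eq[OF sST aA] by simp
        qed
      }
    qed
  qed
  have gpMN: "gp_val S A Delta T valN" by (rule gpM_of_gpN[OF gpN])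
  interpret PMN: pm S A T valN "\<lambda>_. 0" by (rule gp_pm[OF fS TS fA Ane D gpMN]) simp
  have goodN0: "PMN.goodU sigma U0"
  proof -
    have eq': "\<And>s a s'. s \<in> S - T \<Longrightarrow> a \<in> A \<Longrightarrow> val s a s' = valN s a s'"
      using valN_eq by simp
    show ?thesis unfolding U0_def by (rule goodU_mono[OF PM.pm_axioms PMN.pm_axioms eq' good])
  qed
  have goodN: "PMN.goodU sigma (\<lambda>s. c * U0 s)"
    by (rule goodU_scale[OF PMN.pm_axioms goodN0]) (use c in simp)
  have U0t: "\<And>i. i \<le> n \<Longrightarrow> U0 (t i) = rho (t i)" using HT tT unfolding U0_def by simp
  have NLx: "\<And>x. x \<in> vertices S A T \<Longrightarrow>
      Rew_opt SN AN TN (\<lambda>s. if s = fin then 1 else 0) valN x = pm.vlv S valN (\<lambda>s. c * U0 s) x"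
  proof (rule NL[OF gpN goodN])
    show "c * U0 (t 0) = 0" using U0t[of 0] rho0 by simp
    show "\<And>i. 1 \<le> i \<Longrightarrow> i \<le> n \<Longrightarrow>
        c * U0 (t i) = valN (t i) act fin + valN (t i) act (t (i - 1)) * (c * U0 (t (i - 1)))"
    proof -
      fix i assume i1: "1 \<le> i" and i: "i \<le> n"
      have ne0: "t i \<noteq> t 0" using t_eq[OF i, of 0] i1 by simp
      have "t (i - 1) \<in> S" using i by (intro tS) simp
      then have ne2: "t (i - 1) \<noteq> fin" using fresh by auto
      have v1: "valN (t i) act fin = p i" unfolding valN_def using ne0 tT[OF i] idx_t[OF i] by simp
      have v2: "valN (t i) act (t (i - 1)) = 1 - p i" unfolding valN_def using ne0 ne2 tT[OF i] idx_t[OF i] by simp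
      have "c * U0 (t i) = r i" using U0t[OF i] unfolding r_def by simp
      moreover have "c * U0 (t (i - 1)) = r (i - 1)" using U0t[of "i - 1"] i unfolding r_def by simp
      ultimately show "c * U0 (t i) = valN (t i) act fin + valN (t i) act (t (i - 1)) * (c * U0 (t (i - 1)))"
        using v1 v2 p_eq[OF i1 i] by simp
    qed
  qed
  have vscale: "\<And>x. x \<in> vertices S A T \<Longrightarrow> pm.vlv S valN (\<lambda>s. c * U0 s) x = c * PM.vlv U0 x"
  proof -
    fix x assume x: "x \<in> vertices S A T"
    show "pm.vlv S valN (\<lambda>s. c * U0 s) x = c * PM.vlv U0 x"
    proof (cases x)
      case (Inl s) then show ?thesis unfolding PMN.vlv_def PM.vlv_def by simp
    next
      case (Inr pr)
      then obtain s a where pr: "x = Inr (s, a)" by (cases pr) auto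
      then have sa: "s \<in> S - T" "a \<in> A" using x unfolding vertices_def by auto
      have "(\<Sum>s'\<in>S. valN s a s' * (c * U0 s')) = c * (\<Sum>s'\<in>S. val s a s' * U0 s')"
        using valN_eq[OF sa] by (simp add: sum_distrib_left mult.left_commute)
      then show ?thesis using pr unfolding PMN.vlv_def PM.vlv_def by simp
    qed
  qed
  have VLx: "\<And>x. x \<in> vertices S A T \<Longrightarrow> Rew_opt S A T rho val x = PM.vlv U0 x"
    using PM.VL[OF good[folded U0_def]] HT unfolding U0_def by blast
  obtain w where w: "w \<in> W" and le: "Rew_opt SN AN TN (\<lambda>s. if s = fin then 1 else 0) valN v \<le>
      Rew_opt SN AN TN (\<lambda>s. if s = fin then 1 else 0) valN w"
    using NW gpN unfolding never_worse_def by blast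
  have wV: "w \<in> vertices S A T" using w W by blast
  have "c * PM.vlv U0 v \<le> c * PM.vlv U0 w" using le NLx[OF v] NLx[OF wV] vscale[OF v] vscale[OF wV] by simp
  then have "PM.vlv U0 v \<le> PM.vlv U0 w" using c by simp
  then have "Rew_opt S A T rho val v \<le> Rew_opt S A T rho val w" using VLx[OF v] VLx[OF wV] by simp
  then show "\<exists>w\<in>W. Rew_opt S A T rho val v \<le> Rew_opt S A T rho val w" using w by blast
qed

end

theorem theorem2:
  fixes S :: "'s set" and A :: "'a set" and Delta :: "('s \<times> 'a \<times> 's) set"
    and T :: "'s set" and rho :: "'s \<Rightarrow> real"
    and n :: nat and t :: "nat \<Rightarrow> 's"
    and fin fail :: 's and act :: 'a
    and v :: "'s + ('s \<times> 'a)" and W :: "('s + ('s \<times> 'a)) set"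
  assumes M: "wtpMDP S A Delta T rho"
    and T_def: "T = t ` {0..n}"
    and rho0: "rho (t 0) = 0"
    and rho_mono: "\<forall>i<n. rho (t i) < rho (t (Suc i))"
    and fresh: "fin \<notin> S" "fail \<notin> S" "fin \<noteq> fail" "act \<notin> A"
    and v: "v \<in> vertices S A T"
    and W: "W \<subseteq> vertices S A T"
  shows "never_worse S A Delta T rho v W \<longleftrightarrow>
         never_worse (S \<union> {fin, fail}) (insert act A)
           (Delta \<union> {(t i, act, fin) | i. 1 \<le> i \<and> i \<le> n}
                  \<union> {(t i, act, t (i - 1)) | i. 1 \<le> i \<and> i \<le> n}
                  \<union> {(t 0, act, fail)})
           {fin, fail} (\<lambda>s. if s = fin then 1 else 0) v W"
proof -
  have fS: "finite S" and fA: "finite A" and Ane: "A \<noteq> {}" and TS: "T \<subseteq> S"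
    and D: "Delta \<subseteq> (S - T) \<times> A \<times> S"
    using M unfolding wtpMDP_def by auto
  have inj: "inj_on t {0..n}"
  proof (rule inj_onI)
    fix i j assume i: "i \<in> {0..n}" and j: "j \<in> {0..n}" and eq: "t i = t j"
    show "i = j"
    proof (rule ccontr)
      assume "i \<noteq> j"
      then consider "i < j" | "j < i" by linarith
      then show False
      proof cases
        case 1 then have "rho (t i) < rho (t j)"
          using chain_lt[where r="\<lambda>i. rho (t i)", OF rho_mono] j by simp
        then show False using eq by simp
      next
        case 2 then have "rho (t j) < rho (t i)"
          using chain_lt[where r="\<lambda>i. rho (t i)", OF rho_mono] i by simp
        then show False using eq by simp
      qed
    qed
  qed
  interpret G: gadget S A Delta T n t fin fail act
    by (unfold_locales) (use fS TS fA Ane D T_def inj fresh in auto)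
  have "never_worse S A Delta T rho v W \<longleftrightarrow>
        never_worse (S \<union> {fin, fail}) (insert act A) (DN Delta t n act fin fail)
           {fin, fail} (\<lambda>s. if s = fin then 1 else 0) v W"
    using G.dir1[OF rho0 rho_mono v W] G.dir2[OF rho0 rho_mono v W] by blast
  then show ?thesis unfolding DN_def .
qed


end
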